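(* Let Assumption (H0) hold and consider the sequences $x_t^k$ and $\mathcal{Q}_t^k$ generated by REDDP, where $\lambda_{T,k}=0$ for every $k\ge1$ and $\lim_{k\to+\infty}\lambda_{t,k}=0$ for $t=1,\ldots,T-1$. Then $\mathcal{Q}_{T+1}(x_T^k)=\mathcal{Q}_{T+1}^k(x_T^k)$, $\mathcal{Q}_T(x_{T-1}^k)=\mathcal{Q}_T^k(x_{T-1}^k)=\underline{\mathcal{Q}}_T^k(x_{T-1}^k)$ for all $k$, and for $t=2,\ldots,T-1$, $$\lim_{k\to+\infty}\big(\mathcal{Q}_t(x_{t-1}^k)-\mathcal{Q}_t^k(x_{t-1}^k)\big)=\lim_{k\to+\infty}\big(\mathcal{Q}_t(x_{t-1}^k)-\underline{\mathcal{Q}}_t^k(x_{t-1}^k)\big)=0.$$ Moreover, (i) $\lim_{k\to+\infty}\underline{\mathcal{Q}}_1^k(x_0)=\lim_{k\to+\infty}\bar F_1^{k-1}(x_0,x_1^k,x_1^{P,k})=\mathcal{Q}_1(x_0)$, the optimal value of the problem; and (ii) every accumulation point $(x_1^*,\ldots,x_T^* )$ of the sequence $(x_1^k,\ldots,x_T^k)_k$ is an optimal solution of the problem $\min\sum_{t=1}^Tf_t(x_{t-1},x_t)$ s.t. $x_t\in X_t(x_{t-1})$, $t=1,\ldots,T$.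
   Context: Fix integers $T\ge 1$, $n,p,q\ge 1$ and $x_0\in\mathbb{R}^n$; set $\mathcal{X}_0:=\{x_0\}$. For $t=1,\ldots,T$ let $\mathcal{X}_t\subset\mathbb{R}^n$, $f_t:\mathbb{R}^n\times\mathbb{R}^n\to\mathbb{R}\cup\{+\infty\}$, $g_t=(g_{t,1},\ldots,g_{t,p}):\mathbb{R}^n\times\mathbb{R}^n\to\mathbb{R}^p$, $q\times n$ matrices $A_t,B_t$ and $b_t\in\mathbb{R}^q$. Define $X_t(x_{t-1})=\{x_t\in\mathcal{X}_t: A_tx_t+B_tx_{t-1}=b_t,\ g_t(x_{t-1},x_t)\le 0\}$; the problem is $\min\sum_{t=1}^Tf_t(x_{t-1},x_t)$ s.t. $x_t\in X_t(x_{t-1})$. Define $\mathcal{Q}_{T+1}\equiv0$ and for $t=T,\ldots,1$, $\mathcal{Q}_t(x_{t-1})=\inf\{f_t(x_{t-1},x_t)+\mathcal{Q}_{t+1}(x_t):x_t\in X_t(x_{t-1})\}$. For $\varepsilon>0$, $\mathcal{X}^\varepsilon:=\mathcal{X}+\varepsilon\mathbb{B}_n$, $\mathbb{B}_n$ the closed Euclidean unit ball. Assumption (H0): for $t=1,\ldots,T$: (a) $\mathcal{X}_t$ nonempty, convex, compact; (b) $f_t$ proper, convex, lower semicontinuous; (c) each $g_{t,i}$ convex and lower semicontinuous; (d) there is $\varepsilon>0$ with $\mathcal{X}_{t-1}^\varepsilon\times\mathcal{X}_t\subset\mathrm{dom}(f_t)$ and for every $x_{t-1}\in\mathcal{X}_{t-1}^\varepsilon$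 there is $x_t\in\mathcal{X}_t$ with $g_t(x_{t-1},x_t)\le0$, $A_tx_t+B_tx_{t-1}=b_t$; (e) if $t\ge2$, there exists $(\bar x_{t,t-1},\bar x_{t,t})\in(\mathcal{X}_{t-1}\times\mathrm{ri}(\mathcal{X}_t))\cap\mathrm{ri}(\{(y,x):g_t(y,x)\le0\})$ with $\bar x_{t,t}\in\mathcal{X}_t$, $g_t(\bar x_{t,t-1},\bar x_{t,t})\le0$, $A_t\bar x_{t,t}+B_t\bar x_{t,t-1}=b_t$. REDDP algorithm: initial functions $\mathcal{Q}_t^0:\mathcal{X}_{t-1}\to\mathbb{R}\cup\{-\infty\}$, $t=2,\ldots,T$, with $\mathcal{Q}_t^0\le\mathcal{Q}_t$ (e.g. $\mathcal{Q}_t^0\equiv-\infty$); $\mathcal{Q}_{T+1}^k\equiv0$ for all $k\ge0$. Given nonnegative penalization parameters $\lambda_{t,k}$ with $\lambda_{t,1}=0$ and $\lambda_{T,k}=0$, and arbitrary prox-centers $x_t^{P,k}\in\mathcal{X}_t$. At iteration $k=1,2,\ldots$: Forward pass: $x_0^k=x_0$ and for $t=1,\ldots,T$, $x_t^k\in\arg\min\{\bar F_t^{k-1}(x_{t-1}^k,x_t,x_t^{P,k}): x_t\in X_t(x_{t-1}^k)\}$, where $\bar F_t^{k-1}(x_{t-1},x_t,x^P)=f_t(x_{t-1},x_t)+\mathcal{Q}_{t+1}^{k-1}(x_t)+\lambda_{t,k}\|x_t-x^P\|^2$. Backward pass: for $t=T,\ldots,2$, with $\underline{\mathcal{Q}}_t^k(y):=\inf\{f_t(y,x_t)+\mathcal{Q}_{t+1}^k(x_t):x_t\in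 X_t(y)\}$, take $\beta_t^k\in\partial\underline{\mathcal{Q}}_t^k(x_{t-1}^k)$, form $\mathcal{C}_t^k(y)=\underline{\mathcal{Q}}_t^k(x_{t-1}^k)+\langle\beta_t^k,y-x_{t-1}^k\rangle$ and set $\mathcal{Q}_t^k=\max\{\mathcal{Q}_t^{k-1},\mathcal{C}_t^k\}$. Also $\underline{\mathcal{Q}}_1^k(x_0):=\inf\{f_1(x_0,x_1)+\mathcal{Q}_2^k(x_1):x_1\in X_1(x_0)\}$. *)

theory Defs
  imports "HOL-Analysis.Analysis" "HOL-Library.Extended_Real"
begin

definition proper_fun :: "('a \<Rightarrow> ereal) \<Rightarrow> bool" where
  "proper_fun F \<longleftrightarrow> (\<forall>z. F z \<noteq> -\<infinity>) \<and> (\<exists>z. F z \<noteq> \<infinity>)"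

definition convex_fun :: "('a::real_vector \<Rightarrow> ereal) \<Rightarrow> bool" where
  "convex_fun F \<longleftrightarrow> convex {(z, r::real). F z \<le> ereal r}"

definition lsc_fun :: "('a::topological_space \<Rightarrow> ereal) \<Rightarrow> bool" where
  "lsc_fun F \<longleftrightarrow> (\<forall>c. closed {z. F z \<le> c})"

definition lsc_real :: "('a::topological_space \<Rightarrow> real) \<Rightarrow> bool" where
  "lsc_real F \<longleftrightarrow> (\<forall>c. closed {z. F z \<le> c})"

definition is_subgrad :: "('a::real_inner \<Rightarrow> ereal) \<Rightarrow> 'a \<Rightarrow> 'a \<Rightarrow> bool" where
  "is_subgrad F x \<beta> \<longleftrightarrow> F x \<noteq> \<infinity> \<and> F x \<noteq> -\<infinity> \<and>
      (\<forall>y. F x + ereal (\<beta> \<bullet> (y - x)) \<le> F y)"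

definition enlarge :: "real \<Rightarrow> 'a::real_normed_vector set \<Rightarrow> 'a set" where
  "enlarge \<epsilon> X = {x + e | x e. x \<in> X \<and> norm e \<le> \<epsilon>}"

definition Xfeas :: "(nat \<Rightarrow> (real^'n) set) \<Rightarrow> (nat \<Rightarrow> real^'n^'q) \<Rightarrow> (nat \<Rightarrow> real^'n^'q)
    \<Rightarrow> (nat \<Rightarrow> real^'q) \<Rightarrow> (nat \<Rightarrow> real^'n \<Rightarrow> real^'n \<Rightarrow> real^'p)
    \<Rightarrow> nat \<Rightarrow> real^'n \<Rightarrow> (real^'n) set" where
  "Xfeas Xs A B b g t y = {x \<in> Xs t. A t *v x + B t *v y = b t \<and> (\<forall>i. g t y x $ i \<le> 0)}"

text \<open>Backward recursion: Qrec f X T s is Q_{T+1-s}.\<close>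
fun Qrec :: "(nat \<Rightarrow> 'a \<Rightarrow> 'a \<Rightarrow> ereal) \<Rightarrow> (nat \<Rightarrow> 'a \<Rightarrow> 'a set) \<Rightarrow> nat \<Rightarrow> nat \<Rightarrow> 'a \<Rightarrow> ereal" where
  "Qrec f X T 0 = (\<lambda>_. 0)"
| "Qrec f X T (Suc s) = (\<lambda>y. INF x\<in>X (T - s) y. f (T - s) y x + Qrec f X T s x)"

definition Qval :: "(nat \<Rightarrow> 'a \<Rightarrow> 'a \<Rightarrow> ereal) \<Rightarrow> (nat \<Rightarrow> 'a \<Rightarrow> 'a set) \<Rightarrow> nat \<Rightarrow> nat \<Rightarrow> 'a \<Rightarrow> ereal" where
  "Qval f X T t = Qrec f X T (T + 1 - t)"

definition feasible_traj :: "(nat \<Rightarrow> 'a \<Rightarrow> 'a set) \<Rightarrow> nat \<Rightarrow> 'a \<Rightarrow> (nat \<Rightarrow> 'a) \<Rightarrow> bool" where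
  "feasible_traj X T x0 x \<longleftrightarrow> x 0 = x0 \<and> (\<forall>t\<in>{1..T}. x t \<in> X t (x (t - 1)))"

definition objective :: "(nat \<Rightarrow> 'a \<Rightarrow> 'a \<Rightarrow> ereal) \<Rightarrow> nat \<Rightarrow> (nat \<Rightarrow> 'a) \<Rightarrow> ereal" where
  "objective f T x = (\<Sum>t = 1..T. f t (x (t - 1)) (x t))"

definition optval :: "(nat \<Rightarrow> 'a \<Rightarrow> 'a \<Rightarrow> ereal) \<Rightarrow> (nat \<Rightarrow> 'a \<Rightarrow> 'a set) \<Rightarrow> nat \<Rightarrow> 'a \<Rightarrow> ereal" where
  "optval f X T x0 = (INF x\<in>{x. feasible_traj X T x0 x}. objective f T x)"

definition optimal_solution :: "(nat \<Rightarrow> 'a \<Rightarrow> 'a \<Rightarrow> ereal) \<Rightarrow> (nat \<Rightarrow> 'a \<Rightarrow> 'a set) \<Rightarrow> nat \<Rightarrow> 'a \<Rightarrow> (nat \<Rightarrow> 'a) \<Rightarrow> bool" where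
  "optimal_solution f X T x0 x \<longleftrightarrow> feasible_traj X T x0 x \<and>
     (\<forall>y. feasible_traj X T x0 y \<longrightarrow> objective f T x \<le> objective f T y)"

text \<open>Qlow f X Qk t y = underline Q_t^k(y), where Qk t = Q_t^k for the current k.\<close>
definition Qlow :: "(nat \<Rightarrow> 'a \<Rightarrow> 'a \<Rightarrow> ereal) \<Rightarrow> (nat \<Rightarrow> 'a \<Rightarrow> 'a set) \<Rightarrow> (nat \<Rightarrow> 'a \<Rightarrow> ereal) \<Rightarrow> nat \<Rightarrow> 'a \<Rightarrow> ereal" where
  "Qlow f X Qk t y = (INF x\<in>X t y. f t y x + Qk (t + 1) x)"

text \<open>Fbar f Qk lam t y x xP = bar F_t(y, x, xP) built from Qk t = Q_t^{k-1} and lam = lambda_{t,k}.\<close>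
definition Fbar :: "(nat \<Rightarrow> 'a \<Rightarrow> 'a \<Rightarrow> ereal) \<Rightarrow> (nat \<Rightarrow> 'a::real_normed_vector \<Rightarrow> ereal) \<Rightarrow> real \<Rightarrow> nat \<Rightarrow> 'a \<Rightarrow> 'a \<Rightarrow> 'a \<Rightarrow> ereal" where
  "Fbar f Qk lam t y x xP = f t y x + Qk (t + 1) x + ereal (lam * (norm (x - xP))\<^sup>2)"

end

theory Submission
  imports Defs
begin


lemma lsc_lower_bound:
  fixes F :: "'a::metric_space \<Rightarrow> ereal"
  assumes lsc: "lsc_fun F" and K: "compact K" and nm: "\<forall>z\<in>K. F z \<noteq> -\<infinity>"
  shows "\<exists>m. \<forall>z\<in>K. ereal m \<le> F z"
proof (rule ccontr)
  assume "\<not> ?thesis"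
  then have "\<forall>n::nat. \<exists>z\<in>K. F z < ereal (- real n)" by (meson not_le)
  then obtain z where z: "\<And>n. z n \<in> K" "\<And>n. F (z n) < ereal (- real n)" by metis
  obtain l r where l: "l \<in> K" "strict_mono r" "(z \<circ> r) \<longlonglongrightarrow> l"
    using compact_imp_seq_compact[OF K] z(1) unfolding seq_compact_def by metis
  have "F l \<noteq> -\<infinity>" using nm l by auto
  then obtain N :: nat where N: "ereal (- real N) < F l"
  proof (cases "F l")
    case (real a)
    obtain N :: nat where "real N > - a" using reals_Archimedean2 by blast
    then show ?thesis using that[of N] real by auto
  next
    case PInf then show ?thesis using that[of 0] by auto
  qed (use \<open>F l \<noteq> -\<infinity>\<close> in auto)
  have op: "open {x. ereal (- real N) < F x}"
  proof -
    have "{x. ereal (- real N) < F x} = - {x. F x \<le> ereal (- real N)}" by auto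
    then show ?thesis using lsc unfolding lsc_fun_def by (metis open_Compl)
  qed
  have ev1: "eventually (\<lambda>n. ereal (- real N) < F ((z \<circ> r) n)) sequentially"
    using topological_tendstoD[OF l(3) op] N by auto
  have ev2: "eventually (\<lambda>n. n \<ge> N) sequentially" by (rule eventually_ge_at_top)
  obtain n where n: "ereal (- real N) < F (z (r n))" "n \<ge> N"
  proof -
    obtain M where "\<forall>n\<ge>M. ereal (- real N) < F ((z \<circ> r) n) \<and> n \<ge> N"
      using eventually_conj[OF ev1 ev2] unfolding eventually_sequentially by blast
    then show ?thesis using that[of M] by auto
  qed
  have "r n \<ge> n" using l(2) by (simp add: seq_suble)
  then have "real N \<le> real (r n)" using n(2) by linarith
  then have "ereal (- real (r n)) \<le> ereal (- real N)" by simp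
  then have "F (z (r n)) < ereal (- real N)" using z(2)[of "r n"] by (rule order.strict_trans2[rotated])
  then show False using n(1) by auto
qed

lemma convex_fun_ineq:
  fixes F :: "'a::real_vector \<Rightarrow> ereal"
  assumes "convex_fun F" "F p1 \<le> ereal a1" "F p2 \<le> ereal a2" "0 \<le> u" "u \<le> 1"
  shows "F ((1 - u) *\<^sub>R p1 + u *\<^sub>R p2) \<le> ereal ((1 - u) * a1 + u * a2)"
proof -
  have "(1 - u) *\<^sub>R (p1, a1) + u *\<^sub>R (p2, a2) \<in> {(z, r::real). F z \<le> ereal r}"
    using assms unfolding convex_fun_def by (intro convexD) auto
  then show ?thesis by simp
qed

lemma enlarge_eq: "enlarge e K = (\<Union>x\<in>K. \<Union>y\<in>cball 0 e. {x + y})"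
  unfolding enlarge_def by (auto simp: dist_norm) blast

lemma enlarge_compact: fixes K :: "'a::euclidean_space set" shows "compact K \<Longrightarrow> compact (enlarge e K)"
  unfolding enlarge_eq by (intro compact_sums') (auto simp: compact_cball)

lemma enlarge_convex: "convex K \<Longrightarrow> convex (enlarge e K)"
  unfolding enlarge_eq by (intro convex_sums) auto

lemma enlarge_sub: "e \<ge> 0 \<Longrightarrow> K \<subseteq> enlarge e K"
  unfolding enlarge_def by force




locale reddp =
  fixes T :: nat and x0 :: "real^'n"
    and Xs :: "nat \<Rightarrow> (real^'n) set"
    and f :: "nat \<Rightarrow> real^'n \<Rightarrow> real^'n \<Rightarrow> ereal"
    and g :: "nat \<Rightarrow> real^'n \<Rightarrow> real^'n \<Rightarrow> real^'p"
    and A B :: "nat \<Rightarrow> real^'n^'q" and b :: "nat \<Rightarrow> real^'q"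
    and lam :: "nat \<Rightarrow> nat \<Rightarrow> real"
    and xP :: "nat \<Rightarrow> nat \<Rightarrow> real^'n"
    and xk :: "nat \<Rightarrow> nat \<Rightarrow> real^'n"
    and Qk :: "nat \<Rightarrow> nat \<Rightarrow> real^'n \<Rightarrow> ereal"
    and beta :: "nat \<Rightarrow> nat \<Rightarrow> real^'n"
    and X :: "nat \<Rightarrow> real^'n \<Rightarrow> (real^'n) set"
  assumes X_def: "X = Xfeas Xs A B b g"
  and T1: "T \<ge> 1"
    and X0: "Xs 0 = {x0}"
    and H0a: "\<forall>t\<in>{1..T}. Xs t \<noteq> {} \<and> convex (Xs t) \<and> compact (Xs t)"
    and H0b: "\<forall>t\<in>{1..T}. proper_fun (case_prod (f t)) \<and> convex_fun (case_prod (f t))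
                 \<and> lsc_fun (case_prod (f t))"
    and H0c: "\<forall>t\<in>{1..T}. \<forall>i. convex_on UNIV (\<lambda>(y, x). g t y x $ i)
                 \<and> lsc_real (\<lambda>(y, x). g t y x $ i)"
    and H0d: "\<forall>t\<in>{1..T}. \<exists>\<epsilon>>0.
                 (\<forall>y\<in>enlarge \<epsilon> (Xs (t - 1)). \<forall>x\<in>Xs t. f t y x \<noteq> \<infinity>)
               \<and> (\<forall>y\<in>enlarge \<epsilon> (Xs (t - 1)). \<exists>x\<in>Xs t.
                     (\<forall>i. g t y x $ i \<le> 0) \<and> A t *v x + B t *v y = b t)"
    and init: "\<forall>t\<in>{2..T}. \<forall>y\<in>Xs (t - 1). Qk 0 t y \<noteq> \<infinity> \<and> Qk 0 t y \<le> Qval f X T t y"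
    and QT1: "\<forall>k. Qk k (T + 1) = (\<lambda>_. 0)"
    and lam_nonneg: "\<forall>t\<in>{1..T}. \<forall>k\<ge>1. lam t k \<ge> 0"
    and lam_T: "\<forall>k\<ge>1. lam T k = 0"
    and lam_lim: "\<forall>t\<in>{1..T-1}. (\<lambda>k. lam t k) \<longlonglongrightarrow> 0"
    and xP_in: "\<forall>t\<in>{1..T}. \<forall>k\<ge>1. xP t k \<in> Xs t"
    and fwd0: "\<forall>k\<ge>1. xk k 0 = x0"
    and fwd: "\<forall>k\<ge>1. \<forall>t\<in>{1..T}. xk k t \<in> X t (xk k (t - 1)) \<and>
                 (\<forall>z\<in>X t (xk k (t - 1)).
                    Fbar f (Qk (k - 1)) (lam t k) t (xk k (t - 1)) (xk k t) (xP t k)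
                    \<le> Fbar f (Qk (k - 1)) (lam t k) t (xk k (t - 1)) z (xP t k))"
    and bwd: "\<forall>k\<ge>1. \<forall>t\<in>{2..T}.
                 is_subgrad (Qlow f X (Qk k) t) (xk k (t - 1)) (beta k t) \<and>
                 (\<forall>y\<in>Xs (t - 1). Qk k t y = max (Qk (k - 1) t y)
                    (Qlow f X (Qk k) t (xk k (t - 1)) + ereal (beta k t \<bullet> (y - xk k (t - 1)))))"
begin

abbreviation "Q \<equiv> Qval f X T"
definition "qr t y = real_of_ereal (Q t y)"
definition "fr t y x = real_of_ereal (f t y x)"

lemma memX: "x \<in> X t y \<longleftrightarrow> x \<in> Xs t \<and> A t *v x + B t *v y = b t \<and> (\<forall>i. g t y x $ i \<le> 0)"
  by (simp add: X_def Xfeas_def)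

lemma X_sub: "X t y \<subseteq> Xs t" using memX by auto

lemma Q_T1: "Q (Suc T) y = 0" by (simp add: Qval_def)

lemma Q_step: assumes "1 \<le> t" "t \<le> T"
  shows "Q t y = (INF x\<in>X t y. f t y x + Q (Suc t) x)"
proof -
  have e1: "T + 1 - t = Suc (T - t)" using assms by simp
  have e2: "T - (T - t) = t" using assms by simp
  have e3: "T + 1 - Suc t = T - t" by simp
  show ?thesis unfolding Qval_def e1 e3 by (simp add: e2)
qed

lemma Xs_prop: "t \<le> T \<Longrightarrow> Xs t \<noteq> {} \<and> convex (Xs t) \<and> compact (Xs t)"
  using H0a X0 by (cases "t = 0") auto

definition "Pd t e \<longleftrightarrow> (\<forall>y\<in>enlarge e (Xs (t - 1)). \<forall>x\<in>Xs t. f t y x \<noteq> \<infinity>)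
               \<and> (\<forall>y\<in>enlarge e (Xs (t - 1)). \<exists>x\<in>Xs t.
                     (\<forall>i. g t y x $ i \<le> 0) \<and> A t *v x + B t *v y = b t)"
definition "ep t = (SOME e. e > 0 \<and> Pd t e)"
definition "D t = (if t \<le> T then enlarge (ep t) (Xs (t - 1)) else UNIV)"

lemma ep: assumes "1 \<le> t" "t \<le> T"
  shows "ep t > 0" "y \<in> D t \<Longrightarrow> x \<in> Xs t \<Longrightarrow> f t y x \<noteq> \<infinity>" "y \<in> D t \<Longrightarrow> X t y \<noteq> {}"
proof -
  have "\<exists>e. e > 0 \<and> Pd t e" using H0d assms unfolding Pd_def by auto
  then have *: "ep t > 0 \<and> Pd t (ep t)" unfolding ep_def by (rule someI_ex)
  then show "ep t > 0" by auto
  show "y \<in> D t \<Longrightarrow> x \<in> Xs t \<Longrightarrow> f t y x \<noteq> \<infinity>" using * assms unfolding D_def Pd_def by auto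
  show "y \<in> D t \<Longrightarrow> X t y \<noteq> {}" using * assms unfolding D_def Pd_def ex_in_conv[symmetric] memX by fastforce
qed

lemma D_convex: "convex (D t)"
  unfolding D_def using Xs_prop by (auto intro: enlarge_convex)

lemma D_compact: "t \<le> T \<Longrightarrow> compact (D t)"
  unfolding D_def using Xs_prop by (auto intro: enlarge_compact)

lemma Xs_D: assumes "1 \<le> t" "t \<le> Suc T" shows "Xs (t - 1) \<subseteq> D t"
proof (cases "t \<le> T")
  case True
  have "Xs (t-1) \<subseteq> enlarge (ep t) (Xs (t-1))"
    by (rule enlarge_sub) (use ep(1)[OF assms(1) True] in simp)
  then show ?thesis unfolding D_def using True by simp
qed (auto simp: D_def)

lemma f_nminf: "1 \<le> t \<Longrightarrow> t \<le> T \<Longrightarrow> f t y x \<noteq> -\<infinity>"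
  using H0b unfolding proper_fun_def by auto

lemma f_fin: "1 \<le> t \<Longrightarrow> t \<le> T \<Longrightarrow> y \<in> D t \<Longrightarrow> x \<in> Xs t \<Longrightarrow> f t y x = ereal (fr t y x)"
  unfolding fr_def using f_nminf ep(2) by (cases "f t y x") auto

lemma f_lb: assumes "1 \<le> t" "t \<le> T" shows "\<exists>m. \<forall>y\<in>D t. \<forall>x\<in>Xs t. m \<le> fr t y x"
proof -
  have "\<exists>m. \<forall>z\<in>D t \<times> Xs t. ereal m \<le> case_prod (f t) z"
    using assms H0b f_nminf D_compact Xs_prop
    by (intro lsc_lower_bound) (auto intro!: compact_Times)
  then obtain m where "\<forall>z\<in>D t \<times> Xs t. ereal m \<le> case_prod (f t) z" by blast
  then show ?thesis using f_fin[OF assms] by (intro exI[of _ m]) auto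
qed

lemma f_conv: assumes "1 \<le> t" "t \<le> T" "y1 \<in> D t" "y2 \<in> D t" "x1 \<in> Xs t" "x2 \<in> Xs t" "0 \<le> u" "u \<le> 1"
  shows "fr t ((1 - u) *\<^sub>R y1 + u *\<^sub>R y2) ((1 - u) *\<^sub>R x1 + u *\<^sub>R x2) \<le> (1 - u) * fr t y1 x1 + u * fr t y2 x2"
proof -
  have cf: "convex_fun (case_prod (f t))" using H0b assms by auto
  have "case_prod (f t) ((1 - u) *\<^sub>R (y1, x1) + u *\<^sub>R (y2, x2)) \<le> ereal ((1 - u) * fr t y1 x1 + u * fr t y2 x2)"
    using assms f_fin[OF assms(1,2)] by (intro convex_fun_ineq[OF cf]) auto
  moreover have "(1 - u) *\<^sub>R y1 + u *\<^sub>R y2 \<in> D t" using D_convex assms by (simp add: convexD)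
  moreover have "(1 - u) *\<^sub>R x1 + u *\<^sub>R x2 \<in> Xs t" using Xs_prop assms by (simp add: convexD)
  ultimately show ?thesis using f_fin[OF assms(1,2)] by simp
qed

definition "QPp t \<longleftrightarrow> (\<forall>y\<in>D t. Q t y = ereal (qr t y)) \<and> (\<exists>m. \<forall>y\<in>D t. m \<le> qr t y)
   \<and> convex_on (D t) (qr t)"

lemma QP_base: "QPp (Suc T)"
  unfolding QPp_def D_def qr_def by (auto simp: Q_T1 convex_on_const zero_ereal_def intro!: exI[of _ "0::real"])

lemma QP_step: assumes t: "1 \<le> t" "t \<le> T" and IH: "QPp (Suc t)" shows "QPp t"
proof -
  have XsD: "Xs t \<subseteq> D (Suc t)" using Xs_D[of "Suc t"] t by simp
  obtain m' where m': "\<And>y. y \<in> D (Suc t) \<Longrightarrow> m' \<le> qr (Suc t) y" using IH unfolding QPp_def by blast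
  obtain mf where mf: "\<And>y x. y \<in> D t \<Longrightarrow> x \<in> Xs t \<Longrightarrow> mf \<le> fr t y x" using f_lb[OF t] by blast
  have Qe: "\<And>x. x \<in> Xs t \<Longrightarrow> Q (Suc t) x = ereal (qr (Suc t) x)" using IH XsD unfolding QPp_def by blast
  have cq: "convex_on (D (Suc t)) (qr (Suc t))" using IH unfolding QPp_def by blast
  have Qrep: "Q t y = (INF x\<in>X t y. ereal (fr t y x + qr (Suc t) x))" if "y \<in> D t" for y
    unfolding Q_step[OF t]
  proof (intro INF_cong refl)
    fix x assume "x \<in> X t y"
    then have "x \<in> Xs t" using X_sub by blast
    then show "f t y x + Q (Suc t) x = ereal (fr t y x + qr (Suc t) x)" by (simp add: f_fin[OF t that] Qe)
  qed
  have fin: "Q t y = ereal (qr t y) \<and> mf + m' \<le> qr t y" if y: "y \<in> D t" for y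
  proof -
    obtain x where x: "x \<in> X t y" using ep(3)[OF t y] by blast
    have up: "Q t y \<le> ereal (fr t y x + qr (Suc t) x)" unfolding Qrep[OF y] using x by (rule INF_lower)
    have lo: "ereal (mf + m') \<le> Q t y" unfolding Qrep[OF y]
    proof (rule INF_greatest)
      fix x' assume "x' \<in> X t y"
      then have "x' \<in> Xs t" using X_sub by auto
      then show "ereal (mf + m') \<le> ereal (fr t y x' + qr (Suc t) x')"
        using mf[OF y] m' XsD by (simp add: add_mono subsetD)
    qed
    have "Q t y = ereal (qr t y)" unfolding qr_def using up lo by (cases "Q t y") auto
    then show ?thesis using lo by simp
  qed
  have conv: "convex_on (D t) (qr t)"
  proof (rule convex_onI)
    fix u :: real and y1 y2 assume u: "0 < u" "u < 1" and y: "y1 \<in> D t" "y2 \<in> D t"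
    show "qr t ((1 - u) *\<^sub>R y1 + u *\<^sub>R y2) \<le> (1 - u) * qr t y1 + u * qr t y2"
    proof (rule field_le_epsilon)
      fix \<eta> :: real assume eta: "0 < \<eta>"
      have "\<exists>x1\<in>X t y1. fr t y1 x1 + qr (Suc t) x1 < qr t y1 + \<eta>"
      proof -
        have "(INF x\<in>X t y1. ereal (fr t y1 x + qr (Suc t) x)) < ereal (qr t y1 + \<eta>)"
          using fin[OF y(1)] Qrep[OF y(1)] eta by simp
        then show ?thesis unfolding INF_less_iff by simp
      qed
      then obtain x1 where x1: "x1 \<in> X t y1" "fr t y1 x1 + qr (Suc t) x1 < qr t y1 + \<eta>" by blast
      have "\<exists>x2\<in>X t y2. fr t y2 x2 + qr (Suc t) x2 < qr t y2 + \<eta>"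
      proof -
        have "(INF x\<in>X t y2. ereal (fr t y2 x + qr (Suc t) x)) < ereal (qr t y2 + \<eta>)"
          using fin[OF y(2)] Qrep[OF y(2)] eta by simp
        then show ?thesis unfolding INF_less_iff by simp
      qed
      then obtain x2 where x2: "x2 \<in> X t y2" "fr t y2 x2 + qr (Suc t) x2 < qr t y2 + \<eta>" by blast
      define yu where "yu = (1 - u) *\<^sub>R y1 + u *\<^sub>R y2"
      define z where "z = (1 - u) *\<^sub>R x1 + u *\<^sub>R x2"
      have x12: "x1 \<in> Xs t" "x2 \<in> Xs t" using x1 x2 X_sub by auto
      have yuD: "yu \<in> D t" unfolding yu_def using D_convex y u by (simp add: convexD)
      have zX: "z \<in> X t yu"
      proof -
        have "z \<in> Xs t" unfolding z_def using Xs_prop t x12 u by (simp add: convexD)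
        moreover have "A t *v z + B t *v yu = (1 - u) *\<^sub>R (A t *v x1 + B t *v y1) + u *\<^sub>R (A t *v x2 + B t *v y2)"
          unfolding z_def yu_def by (simp add: algebra_simps)
        moreover have "A t *v x1 + B t *v y1 = b t" "A t *v x2 + B t *v y2 = b t" using x1 x2 memX by auto
        moreover have "(1 - u) *\<^sub>R b t + u *\<^sub>R b t = b t" by (metis scaleR_left_distrib diff_add_cancel scaleR_one)
        moreover have "g t yu z $ i \<le> 0" for i
        proof -
          have cg: "convex_on UNIV (\<lambda>(y, x). g t y x $ i)" using H0c t by auto
          have "(\<lambda>(y, x). g t y x $ i) ((1 - u) *\<^sub>R (y1, x1) + u *\<^sub>R (y2, x2))
                 \<le> (1 - u) * (\<lambda>(y, x). g t y x $ i) (y1, x1) + u * (\<lambda>(y, x). g t y x $ i) (y2, x2)"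
            using u by (intro convex_onD[OF cg]) auto
          then have "g t yu z $ i \<le> (1 - u) * g t y1 x1 $ i + u * g t y2 x2 $ i"
            unfolding yu_def z_def by simp
          moreover have "g t y1 x1 $ i \<le> 0" "g t y2 x2 $ i \<le> 0" using x1 x2 memX by auto
          ultimately show ?thesis using u
            by (smt (verit, best) mult_nonneg_nonpos)
        qed
        ultimately show ?thesis unfolding memX by auto
      qed
      have s1: "qr t yu \<le> fr t yu z + qr (Suc t) z"
      proof -
        have "Q t yu \<le> ereal (fr t yu z + qr (Suc t) z)" unfolding Qrep[OF yuD] using zX by (rule INF_lower)
        then show ?thesis using fin[OF yuD] by simp
      qed
      have s2: "fr t yu z \<le> (1 - u) * fr t y1 x1 + u * fr t y2 x2"
        unfolding yu_def z_def using u y x12 by (intro f_conv[OF t]) auto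
      have s3: "qr (Suc t) z \<le> (1 - u) * qr (Suc t) x1 + u * qr (Suc t) x2"
        unfolding z_def using u x12 XsD by (intro convex_onD[OF cq]) auto
      have h1: "(1 - u) * (fr t y1 x1 + qr (Suc t) x1) \<le> (1 - u) * (qr t y1 + \<eta>)"
        using x1 u by (intro mult_left_mono) auto
      have h2: "u * (fr t y2 x2 + qr (Suc t) x2) \<le> u * (qr t y2 + \<eta>)"
        using x2 u by (intro mult_left_mono) auto
      have h1': "(1 - u) * fr t y1 x1 + (1 - u) * qr (Suc t) x1 \<le> (1 - u) * qr t y1 + (1 - u) * \<eta>"
        using h1 by (simp add: algebra_simps)
      have h2': "u * fr t y2 x2 + u * qr (Suc t) x2 \<le> u * qr t y2 + u * \<eta>"
        using h2 by (simp add: algebra_simps)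
      have e: "(1 - u) * \<eta> + u * \<eta> = \<eta>" by (simp add: algebra_simps)
      show "qr t ((1 - u) *\<^sub>R y1 + u *\<^sub>R y2) \<le> (1 - u) * qr t y1 + u * qr t y2 + \<eta>"
        using s1 s2 s3 h1' h2' e unfolding yu_def by linarith
    qed
  qed (rule D_convex)
  show ?thesis unfolding QPp_def using fin conv by blast
qed

lemma QP: assumes "1 \<le> t" "t \<le> Suc T" shows "QPp t"
proof (rule inc_induct[of t "Suc T" QPp])
  show "t \<le> Suc T" by fact
  show "QPp (Suc T)" by (rule QP_base)
  fix n assume "t \<le> n" "n < Suc T" "QPp (Suc n)"
  then show "QPp n" using assms by (auto intro!: QP_step[of n])
qed

end


context reddp begin

lemma bwd_sg: "1 \<le> k \<Longrightarrow> t \<in> {2..T} \<Longrightarrow> is_subgrad (Qlow f X (Qk k) t) (xk k (t - 1)) (beta k t)"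
  using bwd by blast

lemma bwd_eq: "1 \<le> k \<Longrightarrow> t \<in> {2..T} \<Longrightarrow> y \<in> Xs (t - 1) \<Longrightarrow> Qk k t y = max (Qk (k - 1) t y)
                    (Qlow f X (Qk k) t (xk k (t - 1)) + ereal (beta k t \<bullet> (y - xk k (t - 1))))"
  using bwd by blast

lemma Q_fin: "1 \<le> t \<Longrightarrow> t \<le> Suc T \<Longrightarrow> y \<in> D t \<Longrightarrow> Q t y = ereal (qr t y)"
  using QP unfolding QPp_def by blast

lemma Q_fin': "1 \<le> t \<Longrightarrow> t \<le> Suc T \<Longrightarrow> y \<in> Xs (t - 1) \<Longrightarrow> Q t y = ereal (qr t y)"
  using Q_fin Xs_D by blast

lemma xk_in: "1 \<le> k \<Longrightarrow> t \<le> T \<Longrightarrow> xk k t \<in> Xs t"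
proof (cases "t = 0")
  case True
  assume "1 \<le> k" then show ?thesis using True fwd0 X0 by auto
next
  case False
  assume "1 \<le> k" "t \<le> T"
  then show ?thesis using fwd False X_sub by fastforce
qed

lemma Qlow_le: assumes "1 \<le> t" "t \<le> T" "\<forall>x\<in>Xs t. Qk k (Suc t) x \<le> Q (Suc t) x"
  shows "Qlow f X (Qk k) t y \<le> Q t y"
  unfolding Qlow_def Q_step[OF assms(1,2)]
proof (rule INF_mono)
  fix m assume m: "m \<in> X t y"
  then have "m \<in> Xs t" using X_sub by blast
  then show "\<exists>n\<in>X t y. f t y n + Qk k (t + 1) n \<le> f t y m + Q (Suc t) m"
    using m assms(3) by (intro bexI[of _ m]) (auto intro!: add_left_mono)
qed

lemma valid_k: "\<forall>t\<in>{2..Suc T}. \<forall>y\<in>Xs (t - 1). Qk k t y \<le> Q t y"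
proof (induction k)
  case 0
  show ?case
  proof (intro ballI)
    fix t y assume t: "t \<in> {2..Suc T}" and y: "y \<in> Xs (t - 1)"
    show "Qk 0 t y \<le> Q t y"
    proof (cases "t = Suc T")
      case True then show ?thesis using QT1 Q_T1 by simp
    next
      case False then show ?thesis using init t y by auto
    qed
  qed
next
  case (Suc k)
  show ?case
  proof (intro ballI)
    fix t y assume t: "t \<in> {2..Suc T}" and y: "y \<in> Xs (t - 1)"
    define P where "P = (\<lambda>t. \<forall>y\<in>Xs (t - 1). Qk (Suc k) t y \<le> Q t y)"
    have "P t"
    proof (rule inc_induct[of t "Suc T" P])
      show "t \<le> Suc T" using t by simp
      show "P (Suc T)" unfolding P_def using QT1 Q_T1 by simp
      fix n assume n: "t \<le> n" "n < Suc T" "P (Suc n)"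
      have n2: "n \<in> {2..T}" using n t by auto
      have b: "is_subgrad (Qlow f X (Qk (Suc k)) n) (xk (Suc k) (n - 1)) (beta (Suc k) n)"
         "\<And>y. y\<in>Xs (n - 1) \<Longrightarrow> Qk (Suc k) n y = max (Qk k n y)
              (Qlow f X (Qk (Suc k)) n (xk (Suc k) (n - 1)) + ereal (beta (Suc k) n \<bullet> (y - xk (Suc k) (n - 1))))"
        using bwd_sg[of "Suc k" n] bwd_eq[of "Suc k" n] n2 by auto
      show "P n" unfolding P_def
      proof (intro ballI)
        fix y assume y: "y \<in> Xs (n - 1)"
        have "Qlow f X (Qk (Suc k)) n (xk (Suc k) (n - 1)) + ereal (beta (Suc k) n \<bullet> (y - xk (Suc k) (n - 1)))
              \<le> Qlow f X (Qk (Suc k)) n y"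
          using b(1) unfolding is_subgrad_def by blast
        also have "\<dots> \<le> Q n y"
          using n(3) n2 unfolding P_def by (intro Qlow_le) auto
        finally have 1: "Qlow f X (Qk (Suc k)) n (xk (Suc k) (n - 1)) + ereal (beta (Suc k) n \<bullet> (y - xk (Suc k) (n - 1))) \<le> Q n y" .
        have 2: "Qk k n y \<le> Q n y" using Suc.IH n2 y by auto
        show "Qk (Suc k) n y \<le> Q n y" using b(2)[OF y] 1 2 by simp
      qed
    qed
    then show "Qk (Suc k) t y \<le> Q t y" unfolding P_def using y by blast
  qed
qed

lemma valid: "t \<in> {2..Suc T} \<Longrightarrow> y \<in> Xs (t - 1) \<Longrightarrow> Qk k t y \<le> Q t y"
  using valid_k by blast

lemma Qlow_leQ: "1 \<le> t \<Longrightarrow> t \<le> T \<Longrightarrow> Qlow f X (Qk k) t y \<le> Q t y"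
  using valid[of "Suc t"] by (intro Qlow_le) auto

lemma mono_k: "1 \<le> k \<Longrightarrow> t \<in> {2..Suc T} \<Longrightarrow> y \<in> Xs (t - 1) \<Longrightarrow> Qk (k - 1) t y \<le> Qk k t y"
proof (cases "t = Suc T")
  case True then show ?thesis using QT1 by simp
next
  case False
  assume "1 \<le> k" "t \<in> {2..Suc T}" "y \<in> Xs (t - 1)"
  then show ?thesis using bwd_eq[of k t y] False by auto
qed

lemma mono_kj: assumes "1 \<le> j" "j \<le> k" "t \<in> {2..Suc T}" "y \<in> Xs (t - 1)"
  shows "Qk j t y \<le> Qk k t y"
  using assms(2)
proof (induction k rule: dec_induct)
  case (step m)
  have "Qk m t y \<le> Qk (Suc m) t y" using mono_k[of "Suc m" t y] assms by simp
  then show ?case using step.IH by (rule order_trans[rotated])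
qed simp

definition "cval k t = real_of_ereal (Qlow f X (Qk k) t (xk k (t - 1)))"

lemma Qlow_fin: "1 \<le> k \<Longrightarrow> t \<in> {2..T} \<Longrightarrow> Qlow f X (Qk k) t (xk k (t - 1)) = ereal (cval k t)"
proof -
  assume "1 \<le> k" "t \<in> {2..T}"
  then have "\<bar>Qlow f X (Qk k) t (xk k (t - 1))\<bar> \<noteq> \<infinity>"
    using bwd_sg[of k t] unfolding is_subgrad_def by auto
  then show ?thesis unfolding cval_def by (rule ereal_real'[symmetric])
qed

lemma cut: assumes "1 \<le> k" "t \<in> {2..T}" "y \<in> Xs (t - 1)"
  shows "ereal (cval k t + beta k t \<bullet> (y - xk k (t - 1))) \<le> Qk k t y"
proof -
  have "Qk k t y = max (Qk (k - 1) t y) (Qlow f X (Qk k) t (xk k (t - 1)) + ereal (beta k t \<bullet> (y - xk k (t - 1))))"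
    using bwd_eq assms by blast
  then show ?thesis using Qlow_fin[OF assms(1,2)] by simp
qed

lemma Qk_fin: assumes "1 \<le> k" "t \<in> {2..Suc T}" "y \<in> Xs (t - 1)"
  shows "Qk k t y = ereal (real_of_ereal (Qk k t y))"
proof (cases "t = Suc T")
  case True then show ?thesis using QT1 by simp
next
  case False
  then have t: "t \<in> {2..T}" using assms by auto
  have "Qk k t y \<le> ereal (qr t y)" using valid[OF assms(2,3)] Q_fin'[of t y] assms by simp
  moreover have "ereal (cval k t + beta k t \<bullet> (y - xk k (t - 1))) \<le> Qk k t y" by (rule cut[OF assms(1) t assms(3)])
  ultimately show ?thesis by (cases "Qk k t y") auto
qed

end


lemma enlarge_memI: "x \<in> K \<Longrightarrow> norm e \<le> \<epsilon> \<Longrightarrow> x + e \<in> enlarge \<epsilon> K"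
  unfolding enlarge_def by blast

context reddp begin

lemma q_props: assumes t: "1 \<le> t" "t \<le> T"
  shows "\<exists>M. \<forall>y\<in>enlarge (ep t / 2) (Xs (t - 1)). qr t y \<le> M"
    and "uniformly_continuous_on (Xs (t - 1)) (qr t)"
    and "enlarge (ep t / 2) (Xs (t - 1)) \<subseteq> D t"
proof -
  define S where "S = (\<Union>x\<in>Xs (t - 1). \<Union>y\<in>ball 0 (ep t). {x + y})"
  define K where "K = enlarge (ep t / 2) (Xs (t - 1))"
  have ep0: "ep t > 0" using ep(1)[OF t] .
  have cX: "convex (Xs (t - 1))" "compact (Xs (t - 1))" using Xs_prop t by auto
  have oS: "open S" unfolding S_def by (intro open_sums) auto
  have cS: "convex S" unfolding S_def using cX by (intro convex_sums) auto
  have SD: "S \<subseteq> D t"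
  proof
    fix z assume "z \<in> S"
    then obtain x e where "x \<in> Xs (t - 1)" "norm e < ep t" "z = x + e" unfolding S_def by (auto simp: dist_norm)
    then show "z \<in> D t" unfolding D_def enlarge_def using t by fastforce
  qed
  have KS: "K \<subseteq> S"
  proof
    fix z assume "z \<in> K"
    then obtain x e where "x \<in> Xs (t - 1)" "norm e \<le> ep t / 2" "z = x + e" unfolding K_def enlarge_def by auto
    moreover have "e \<in> ball 0 (ep t)" using \<open>norm e \<le> ep t / 2\<close> ep0 by (simp add: dist_norm)
    ultimately show "z \<in> S" unfolding S_def by blast
  qed
  have "convex_on (D t) (qr t)" using QP[of t] t unfolding QPp_def by auto
  then have "convex_on S (qr t)" by (rule convex_on_subset[OF _ SD cS])
  then have contS: "continuous_on S (qr t)" using oS by (intro convex_on_continuous)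
  have cK: "compact K" unfolding K_def using cX by (intro enlarge_compact)
  have contK: "continuous_on K (qr t)" using contS KS by (rule continuous_on_subset)
  have "bounded (qr t ` K)" using compact_continuous_image[OF contK cK] by (rule compact_imp_bounded)
  then obtain a where "\<forall>y\<in>K. \<bar>qr t y\<bar> \<le> a" unfolding bounded_real by auto
  then have "\<forall>y\<in>K. qr t y \<le> a" by (auto dest: abs_le_D1)
  then show "\<exists>M. \<forall>y\<in>enlarge (ep t / 2) (Xs (t - 1)). qr t y \<le> M" unfolding K_def by blast
  have "Xs (t - 1) \<subseteq> K" unfolding K_def using ep0 by (intro enlarge_sub) simp
  then have "continuous_on (Xs (t - 1)) (qr t)" using contK by (rule continuous_on_subset[rotated])
  then show "uniformly_continuous_on (Xs (t - 1)) (qr t)" using cX by (intro compact_uniformly_continuous)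
  show "enlarge (ep t / 2) (Xs (t - 1)) \<subseteq> D t" using KS SD unfolding K_def by blast
qed

lemma Xs_bounded: assumes "t \<le> T" shows "\<exists>R. \<forall>x\<in>Xs t. norm x \<le> R"
proof -
  have "compact (Xs t)" using Xs_prop[OF assms] by blast
  then have "bounded (Xs t)" by (rule compact_imp_bounded)
  then show ?thesis unfolding bounded_iff by blast
qed

lemma Qk_lb: assumes s: "s \<in> {2..Suc T}" shows "\<exists>m. \<forall>k\<ge>1. \<forall>x\<in>Xs (s - 1). ereal m \<le> Qk k s x"
proof (cases "s = Suc T")
  case True then show ?thesis using QT1 by (intro exI[of _ 0]) auto
next
  case False
  then have s': "s \<in> {2..T}" using s by auto
  have "s - 1 \<le> T" using s' by auto
  then obtain R where R: "\<forall>x\<in>Xs (s - 1). norm x \<le> R" using Xs_bounded by blast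
  define x1 where "x1 = xk 1 (s - 1)"
  have x1: "x1 \<in> Xs (s - 1)" unfolding x1_def using xk_in[of 1 "s - 1"] s' by auto
  show ?thesis
  proof (intro exI[of _ "cval 1 s - norm (beta 1 s) * (R + R)"] allI impI ballI)
    fix k :: nat and x assume k: "1 \<le> k" and x: "x \<in> Xs (s - 1)"
    have "\<bar>beta 1 s \<bullet> (x - x1)\<bar> \<le> norm (beta 1 s) * norm (x - x1)" by (rule Cauchy_Schwarz_ineq2)
    also have "\<dots> \<le> norm (beta 1 s) * (R + R)"
    proof (rule mult_left_mono)
      have "norm (x - x1) \<le> norm x + norm x1" by (rule norm_triangle_ineq4)
      moreover have "norm x \<le> R" "norm x1 \<le> R" using R x x1 by auto
      ultimately show "norm (x - x1) \<le> R + R" by linarith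
    qed simp
    finally have "cval 1 s - norm (beta 1 s) * (R + R) \<le> cval 1 s + beta 1 s \<bullet> (x - x1)" by linarith
    then have "ereal (cval 1 s - norm (beta 1 s) * (R + R)) \<le> ereal (cval 1 s + beta 1 s \<bullet> (x - x1))" by simp
    also have "\<dots> \<le> Qk 1 s x" using cut[of 1 s x] s' x unfolding x1_def by simp
    also have "\<dots> \<le> Qk k s x" using mono_kj[of 1 k s x] k s x by simp
    finally show "ereal (cval 1 s - norm (beta 1 s) * (R + R)) \<le> Qk k s x" .
  qed
qed

lemma Qlow_lb: assumes t: "1 \<le> t" "t \<le> T"
  shows "\<exists>m. \<forall>k\<ge>1. \<forall>y\<in>D t. ereal m \<le> Qlow f X (Qk k) t y"
proof -
  obtain m where m: "\<forall>k\<ge>1. \<forall>x\<in>Xs t. ereal m \<le> Qk k (Suc t) x"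
    using Qk_lb[of "Suc t"] t by auto
  obtain mf where mf: "\<And>y x. y \<in> D t \<Longrightarrow> x \<in> Xs t \<Longrightarrow> mf \<le> fr t y x" using f_lb[OF t] by blast
  show ?thesis
  proof (intro exI[of _ "mf + m"] allI impI ballI)
    fix k :: nat and y assume k: "1 \<le> k" and y: "y \<in> D t"
    show "ereal (mf + m) \<le> Qlow f X (Qk k) t y" unfolding Qlow_def
    proof (rule INF_greatest)
      fix x assume "x \<in> X t y"
      then have x: "x \<in> Xs t" using X_sub by blast
      have "ereal (mf + m) = ereal mf + ereal m" by simp
      also have "\<dots> \<le> f t y x + Qk k (t + 1) x"
        using mf[OF y x] m k x f_fin[OF t y x] by (intro add_mono) auto
      finally show "ereal (mf + m) \<le> f t y x + Qk k (t + 1) x" .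
    qed
  qed
qed

lemma beta_bd: assumes t: "t \<in> {2..T}" shows "\<exists>L\<ge>0. \<forall>k\<ge>1. norm (beta k t) \<le> L"
proof -
  have t1: "1 \<le> t" "t \<le> T" using t by auto
  obtain M where M: "\<forall>y\<in>enlarge (ep t / 2) (Xs (t - 1)). qr t y \<le> M" using q_props(1)[OF t1] by blast
  have KD: "enlarge (ep t / 2) (Xs (t - 1)) \<subseteq> D t" using q_props(3)[OF t1] .
  obtain m where m: "\<forall>k\<ge>1. \<forall>y\<in>D t. ereal m \<le> Qlow f X (Qk k) t y" using Qlow_lb[OF t1] by blast
  define \<delta> where "\<delta> = ep t / 2"
  have d0: "\<delta> > 0" unfolding \<delta>_def using ep(1)[OF t1] by simp
  show ?thesis
  proof (intro exI[of _ "max 0 ((M - m) / \<delta>)"] conjI allI impI)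
    fix k :: nat assume k: "1 \<le> k"
    define x where "x = xk k (t - 1)"
    define \<beta> where "\<beta> = beta k t"
    have x: "x \<in> Xs (t - 1)" unfolding x_def using xk_in[OF k, of "t - 1"] t by auto
    show "norm (beta k t) \<le> max 0 ((M - m) / \<delta>)"
    proof (cases "\<beta> = 0")
      case True then show ?thesis unfolding \<beta>_def by simp
    next
      case False
      then have nb: "norm \<beta> > 0" by simp
      define y where "y = x + (\<delta> / norm \<beta>) *\<^sub>R \<beta>"
      have yK: "y \<in> enlarge (ep t / 2) (Xs (t - 1))"
        unfolding y_def using x nb d0 unfolding \<delta>_def by (intro enlarge_memI) auto
      have ip: "\<beta> \<bullet> (y - x) = \<delta> * norm \<beta>"
        unfolding y_def using nb by (simp add: power2_norm_eq_inner[symmetric] power2_eq_square)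
      have "Qlow f X (Qk k) t x + ereal (\<beta> \<bullet> (y - x)) \<le> Qlow f X (Qk k) t y"
        using bwd_sg[OF k t] unfolding is_subgrad_def x_def \<beta>_def by blast
      also have "\<dots> \<le> Q t y" by (rule Qlow_leQ[OF t1])
      also have "\<dots> = ereal (qr t y)" using Q_fin[of t y] t1 yK KD by auto
      finally have "ereal (cval k t + \<delta> * norm \<beta>) \<le> ereal (qr t y)"
        using Qlow_fin[OF k t] ip unfolding x_def by simp
      moreover have "m \<le> cval k t"
      proof -
        have "x \<in> D t" using x Xs_D[of t] t1 by auto
        then have "ereal m \<le> Qlow f X (Qk k) t x" using m k by blast
        then show ?thesis using Qlow_fin[OF k t] unfolding x_def by simp
      qed
      moreover have "qr t y \<le> M" using M yK by blast
      ultimately have "\<delta> * norm \<beta> \<le> M - m" by simp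
      then have "norm \<beta> \<le> (M - m) / \<delta>" using d0 by (simp add: field_simps)
      then show ?thesis unfolding \<beta>_def by simp
    qed
  qed simp
qed

end


context reddp begin

lemma lag: assumes t: "t \<in> {2..T}" and G: "(\<lambda>k. qr t (xk k (t - 1)) - cval k t) \<longlonglongrightarrow> 0"
  shows "(\<lambda>k. qr t (xk k (t - 1)) - real_of_ereal (Qk (k - 1) t (xk k (t - 1)))) \<longlonglongrightarrow> 0"
proof -
  define xs where "xs k = xk k (t - 1)" for k
  define gap where "gap k = qr t (xs k) - real_of_ereal (Qk (k - 1) t (xs k))" for k
  have t1: "1 \<le> t" "t \<le> T" using t by auto
  obtain L where L: "L \<ge> 0" "\<And>k. 1 \<le> k \<Longrightarrow> norm (beta k t) \<le> L" using beta_bd[OF t] by blast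
  have xsin: "xs k \<in> Xs (t - 1)" if "1 \<le> k" for k
    unfolding xs_def using xk_in[OF that, of "t - 1"] t by auto
  have Qxs: "Q t (xs k) = ereal (qr t (xs k))" if "1 \<le> k" for k
    using Q_fin'[of t "xs k"] xsin[OF that] t by auto
  have Qkk: "Qk (k - 1) t (xs k) = ereal (real_of_ereal (Qk (k - 1) t (xs k)))
      \<and> real_of_ereal (Qk (k - 1) t (xs k)) \<le> qr t (xs k)" if k: "2 \<le> k" for k
  proof -
    have e: "Qk (k - 1) t (xs k) = ereal (real_of_ereal (Qk (k - 1) t (xs k)))"
      using Qk_fin[of "k - 1" t "xs k"] k t xsin[of k] by auto
    moreover have "Qk (k - 1) t (xs k) \<le> Q t (xs k)" using valid[of t "xs k" "k - 1"] t xsin[of k] k by auto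
    ultimately show ?thesis using Qxs[of k] k by (metis ereal_less_eq(3) le_trans one_le_numeral)
  qed
  have gap_nonneg: "0 \<le> gap k" if "2 \<le> k" for k
    using Qkk[OF that] unfolding gap_def by simp
  have gap_ub: "gap k \<le> \<bar>qr t (xs k) - qr t (xs j)\<bar> + \<bar>qr t (xs j) - cval j t\<bar> + L * dist (xs k) (xs j)"
    if k: "2 \<le> k" and j: "1 \<le> j" "j < k" for k j
  proof -
    have "ereal (cval j t + beta j t \<bullet> (xs k - xs j)) \<le> Qk j t (xs k)"
      using cut[of j t "xs k"] j t xsin[of k] k unfolding xs_def by auto
    also have "\<dots> \<le> Qk (k - 1) t (xs k)" using mono_kj[of j "k - 1" t "xs k"] j k t xsin[of k] by auto
    also have "\<dots> = ereal (real_of_ereal (Qk (k - 1) t (xs k)))" using Qkk[OF k] by blast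
    finally have c: "cval j t + beta j t \<bullet> (xs k - xs j) \<le> real_of_ereal (Qk (k - 1) t (xs k))" by simp
    have "\<bar>beta j t \<bullet> (xs k - xs j)\<bar> \<le> norm (beta j t) * norm (xs k - xs j)" by (rule Cauchy_Schwarz_ineq2)
    also have "\<dots> \<le> L * norm (xs k - xs j)" using L(2)[OF j(1)] by (intro mult_right_mono) auto
    finally have "\<bar>beta j t \<bullet> (xs k - xs j)\<bar> \<le> L * dist (xs k) (xs j)" by (simp add: dist_norm)
    then show ?thesis using c unfolding gap_def by linarith
  qed
  have "gap \<longlonglongrightarrow> 0"
  proof (rule ccontr)
    assume "\<not> gap \<longlonglongrightarrow> 0"
    then obtain \<eta> :: real where eta: "\<eta> > 0" and bad: "\<And>N. \<exists>k\<ge>N. \<eta> \<le> \<bar>gap k\<bar>"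
      unfolding LIMSEQ_iff by (auto simp: not_less)
    have "\<forall>N. \<exists>k. k \<ge> N + 2 \<and> \<eta> \<le> \<bar>gap k\<bar>" using bad by blast
    then obtain \<phi> where phi: "\<And>N. \<phi> N \<ge> N + 2" "\<And>N. \<eta> \<le> \<bar>gap (\<phi> N)\<bar>" by metis
    have cX: "compact (Xs (t - 1))" using Xs_prop t by auto
    have "\<forall>N. (xs \<circ> \<phi>) N \<in> Xs (t - 1)"
    proof
      fix N have "1 \<le> \<phi> N" using phi(1)[of N] by simp
      then show "(xs \<circ> \<phi>) N \<in> Xs (t - 1)" using xsin by simp
    qed
    then obtain l u where lu: "l \<in> Xs (t - 1)" "strict_mono u" "((xs \<circ> \<phi>) \<circ> u) \<longlonglongrightarrow> l"
      using compact_imp_seq_compact[OF cX] unfolding seq_compact_def by metis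
    have cau: "Cauchy ((xs \<circ> \<phi>) \<circ> u)" using lu(3) by (rule LIMSEQ_imp_Cauchy)
    have uc: "uniformly_continuous_on (Xs (t - 1)) (qr t)" using q_props(2)[OF t1] .
    obtain d where d: "d > 0" "\<And>x x'. x \<in> Xs (t - 1) \<Longrightarrow> x' \<in> Xs (t - 1) \<Longrightarrow> dist x' x < d \<Longrightarrow> dist (qr t x') (qr t x) < \<eta> / 3"
      using uc eta unfolding uniformly_continuous_on_def by (metis divide_pos_pos zero_less_numeral)
    obtain N1 where N1: "\<And>n. n \<ge> N1 \<Longrightarrow> \<bar>qr t (xk n (t - 1)) - cval n t\<bar> < \<eta> / 3"
      using G eta unfolding LIMSEQ_iff by (metis diff_zero divide_pos_pos real_norm_def zero_less_numeral)
    define e where "e = min d (\<eta> / (3 * (L + 1)))"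
    have e0: "e > 0" unfolding e_def using d eta L by auto
    obtain M where M: "\<And>m n. m \<ge> M \<Longrightarrow> n \<ge> M \<Longrightarrow> dist (((xs \<circ> \<phi>) \<circ> u) m) (((xs \<circ> \<phi>) \<circ> u) n) < e"
      using cau e0 unfolding Cauchy_def by metis
    define i where "i = max M N1"
    define i' where "i' = \<phi> (u i)"
    define j where "j = \<phi> (u i)"
    define k where "k = \<phi> (u i')"
    have ui: "u i \<ge> i" "u i' \<ge> i'" using lu(2) by (auto simp: seq_suble)
    have jk: "j < k" "2 \<le> k" "1 \<le> j" "j \<ge> N1" "i' \<ge> M" "i \<ge> M"
      using phi(1)[of "u i"] phi(1)[of "u i'"] ui unfolding j_def k_def i'_def i_def by auto
    have dkj: "dist (xs k) (xs j) < e" using M[OF jk(5) jk(6)] unfolding k_def j_def by simp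
    have q1: "\<bar>qr t (xs k) - qr t (xs j)\<bar> < \<eta> / 3"
      using d(2)[of "xs j" "xs k"] xsin jk dkj e_def by (simp add: dist_real_def)
    have q2: "\<bar>qr t (xs j) - cval j t\<bar> < \<eta> / 3" using N1[OF jk(4)] unfolding xs_def by simp
    have q3: "L * dist (xs k) (xs j) \<le> \<eta> / 3"
    proof -
      have "L * dist (xs k) (xs j) \<le> L * (\<eta> / (3 * (L + 1)))"
        using dkj L(1) unfolding e_def by (intro mult_left_mono) auto
      also have "\<dots> \<le> \<eta> / 3" using L(1) eta by (simp add: field_simps)
      finally show ?thesis .
    qed
    have "gap k < \<eta>" using gap_ub[OF jk(2) jk(3) jk(1)] q1 q2 q3 by linarith
    moreover have "\<eta> \<le> gap k" using phi(2)[of "u i'"] gap_nonneg[OF jk(2)] unfolding k_def by simp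
    ultimately show False by simp
  qed
  then show ?thesis unfolding gap_def xs_def .
qed

end


context reddp begin

lemma lam_lim': "t \<in> {1..T} \<Longrightarrow> (\<lambda>k. lam t k) \<longlonglongrightarrow> 0"
proof (cases "t = T")
  case True
  have "eventually (\<lambda>k. lam t k = 0) sequentially"
    unfolding eventually_sequentially using lam_T True by (intro exI[of _ 1]) auto
  then show ?thesis by (rule tendsto_eventually)
next
  case False
  assume "t \<in> {1..T}" then show ?thesis using lam_lim False by auto
qed

lemma diam: "t \<le> T \<Longrightarrow> \<exists>Dm. \<forall>z\<in>Xs t. \<forall>z'\<in>Xs t. (norm (z - z'))\<^sup>2 \<le> Dm"
proof -
  assume "t \<le> T"
  then obtain R where R: "\<forall>x\<in>Xs t. norm x \<le> R" using Xs_bounded by blast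
  show ?thesis
  proof (intro exI[of _ "(R + R)\<^sup>2"] ballI)
    fix z z' assume z: "z \<in> Xs t" "z' \<in> Xs t"
    have "norm (z - z') \<le> norm z + norm z'" by (rule norm_triangle_ineq4)
    also have "\<dots> \<le> R + R"
    proof -
      have "norm z \<le> R" "norm z' \<le> R" using R z by auto
      then show ?thesis by linarith
    qed
    finally show "(norm (z - z'))\<^sup>2 \<le> (R + R)\<^sup>2" by (intro power_mono) auto
  qed
qed

lemma step_bounds:
  assumes t: "1 \<le> t" "t \<le> T" and k: "2 \<le> k"
    and Dm: "\<forall>z\<in>Xs t. \<forall>z'\<in>Xs t. (norm (z - z'))\<^sup>2 \<le> Dm"
  defines "y \<equiv> xk k (t - 1)" and "xt \<equiv> xk k t"
  defines "e \<equiv> qr (Suc t) xt - real_of_ereal (Qk (k - 1) (Suc t) xt)"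
  shows "0 \<le> e"
    and "Qlow f X (Qk k) t y = ereal (real_of_ereal (Qlow f X (Qk k) t y))"
    and "\<bar>qr t y - real_of_ereal (Qlow f X (Qk k) t y)\<bar> \<le> e + lam t k * Dm"
    and "Fbar f (Qk (k - 1)) (lam t k) t y xt (xP t k) = ereal (real_of_ereal (Fbar f (Qk (k - 1)) (lam t k) t y xt (xP t k)))"
    and "\<bar>real_of_ereal (Fbar f (Qk (k - 1)) (lam t k) t y xt (xP t k)) - qr t y\<bar> \<le> e + lam t k * Dm"
    and "\<bar>fr t y xt + qr (Suc t) xt - qr t y\<bar> \<le> e + lam t k * Dm"
proof -
  have k1: "1 \<le> k" "1 \<le> k - 1" using k by auto
  define lk where "lk = lam t k"
  have lk0: "0 \<le> lk" unfolding lk_def using lam_nonneg t k1 by auto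
  have y: "y \<in> Xs (t - 1)" unfolding y_def using xk_in[OF k1(1), of "t - 1"] t by auto
  have yD: "y \<in> D t" using y Xs_D[of t] t by auto
  have xtX: "xt \<in> X t y" unfolding xt_def y_def using fwd k1 t by auto
  have xt: "xt \<in> Xs t" using xtX X_sub by blast
  define p where "p = xP t k"
  have p: "p \<in> Xs t" unfolding p_def using xP_in t k1 by auto
  define qk1 where "qk1 z = real_of_ereal (Qk (k - 1) (Suc t) z)" for z
  have Qk1: "Qk (k - 1) (Suc t) z = ereal (qk1 z) \<and> qk1 z \<le> qr (Suc t) z" if z: "z \<in> Xs t" for z
  proof -
    have a: "Qk (k - 1) (Suc t) z = ereal (qk1 z)" unfolding qk1_def using Qk_fin[of "k - 1" "Suc t" z] k1 t z by auto
    have "Qk (k - 1) (Suc t) z \<le> Q (Suc t) z" using valid[of "Suc t" z "k - 1"] t z by auto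
    also have "\<dots> = ereal (qr (Suc t) z)" using Q_fin'[of "Suc t" z] t z by auto
    finally show ?thesis using a by simp
  qed
  have QS: "Q (Suc t) z = ereal (qr (Suc t) z)" if "z \<in> Xs t" for z using Q_fin'[of "Suc t" z] t that by auto
  have fF: "f t y z = ereal (fr t y z)" if "z \<in> Xs t" for z using f_fin[OF t yD that] .
  define h where "h z = fr t y z + qk1 z" for z
  have Fb: "Fbar f (Qk (k - 1)) lk t y z p = ereal (h z + lk * (norm (z - p))\<^sup>2)" if "z \<in> Xs t" for z
    unfolding Fbar_def h_def using fF[OF that] Qk1[OF that] by simp
  have fw: "h xt + lk * (norm (xt - p))\<^sup>2 \<le> h z + lk * (norm (z - p))\<^sup>2" if z: "z \<in> X t y" for z
  proof -
    have zz: "z \<in> Xs t" using z X_sub by blast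
    have "Fbar f (Qk (k - 1)) lk t y xt p \<le> Fbar f (Qk (k - 1)) lk t y z p"
      using fwd k1 t z unfolding lk_def p_def xt_def y_def by auto
    then show ?thesis using Fb[OF xt] Fb[OF zz] by simp
  qed
  have pen: "0 \<le> lk * (norm (z - p))\<^sup>2" "lk * (norm (z - p))\<^sup>2 \<le> lk * Dm" if "z \<in> Xs t" for z
    using lk0 Dm that p by (auto intro: mult_left_mono)
  define a where "a = qr t y"
  have Qy: "Q t y = ereal a" unfolding a_def using Q_fin[OF t(1) _ yD] t by auto
  have Qrep: "Q t y = (INF z\<in>X t y. ereal (fr t y z + qr (Suc t) z))"
    unfolding Q_step[OF t]
  proof (intro INF_cong refl)
    fix z assume "z \<in> X t y"
    then have "z \<in> Xs t" using X_sub by blast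
    then show "f t y z + Q (Suc t) z = ereal (fr t y z + qr (Suc t) z)" by (simp add: fF QS)
  qed
  have i: "a \<le> fr t y xt + qr (Suc t) xt"
  proof -
    have "Q t y \<le> ereal (fr t y xt + qr (Suc t) xt)" unfolding Qrep using xtX by (rule INF_lower)
    then show ?thesis using Qy by simp
  qed
  define Fv where "Fv = h xt + lk * (norm (xt - p))\<^sup>2"
  have ii: "Fv \<le> a + lk * Dm"
  proof (rule field_le_epsilon)
    fix \<eta> :: real assume eta: "0 < \<eta>"
    have "(INF z\<in>X t y. ereal (fr t y z + qr (Suc t) z)) = ereal a" using Qrep Qy by simp
    then have "(INF z\<in>X t y. ereal (fr t y z + qr (Suc t) z)) < ereal (a + \<eta>)" using eta by simp
    then obtain z where z: "z \<in> X t y" "fr t y z + qr (Suc t) z < a + \<eta>" unfolding INF_less_iff by auto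
    have zz: "z \<in> Xs t" using z X_sub by blast
    have "Fv \<le> h z + lk * (norm (z - p))\<^sup>2" unfolding Fv_def by (rule fw[OF z(1)])
    moreover have "qk1 z \<le> qr (Suc t) z" using Qk1[OF zz] by blast
    ultimately show "Fv \<le> a + lk * Dm + \<eta>" using z(2) pen[OF zz] unfolding h_def by linarith
  qed
  have iii: "ereal (h xt - lk * Dm) \<le> Qlow f X (Qk k) t y" unfolding Qlow_def
  proof (rule INF_greatest)
    fix z assume z: "z \<in> X t y"
    have zz: "z \<in> Xs t" using z X_sub by blast
    have "Qk (k - 1) (Suc t) z \<le> Qk k (Suc t) z" using mono_k[of k "Suc t" z] k1 t zz by auto
    then have "ereal (fr t y z) + ereal (qk1 z) \<le> ereal (fr t y z) + Qk k (Suc t) z" using Qk1[OF zz]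
      by (intro add_left_mono) simp
    then have "ereal (h z) \<le> f t y z + Qk k (Suc t) z" unfolding h_def using fF[OF zz] by simp
    moreover have "h xt - lk * Dm \<le> h z" using fw[OF z] pen[OF zz] pen[OF xt] by linarith
    ultimately have "ereal (h xt - lk * Dm) \<le> f t y z + Qk k (Suc t) z"
      by (meson ereal_less_eq(3) order_trans)
    then show "ereal (h xt - lk * Dm) \<le> f t y z + Qk k (t + 1) z" by simp
  qed
  have iv: "Qlow f X (Qk k) t y \<le> ereal a" using Qlow_leQ[OF t] Qy by metis
  define cl where "cl = real_of_ereal (Qlow f X (Qk k) t y)"
  have cle: "Qlow f X (Qk k) t y = ereal cl" unfolding cl_def using iii iv by (cases "Qlow f X (Qk k) t y") auto
  have clb: "h xt - lk * Dm \<le> cl" "cl \<le> a" using iii iv cle by auto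
  have eq: "e = qr (Suc t) xt - qk1 xt" unfolding e_def qk1_def by simp
  have e0: "0 \<le> e" using Qk1[OF xt] eq by simp
  have Fbe: "Fbar f (Qk (k - 1)) (lam t k) t y xt (xP t k) = ereal Fv"
    using Fb[OF xt] unfolding Fv_def lk_def p_def by simp
  have pxt: "0 \<le> lk * (norm (xt - p))\<^sup>2" using pen[OF xt] by blast
  have hx: "h xt = fr t y xt + qk1 xt" unfolding h_def by simp
  show "0 \<le> e" by (rule e0)
  show "Qlow f X (Qk k) t y = ereal (real_of_ereal (Qlow f X (Qk k) t y))" using cle by simp
  show "\<bar>qr t y - real_of_ereal (Qlow f X (Qk k) t y)\<bar> \<le> e + lam t k * Dm"
    using clb i e0 eq hx unfolding cl_def[symmetric] a_def[symmetric] lk_def[symmetric] by linarith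
  show "Fbar f (Qk (k - 1)) (lam t k) t y xt (xP t k) = ereal (real_of_ereal (Fbar f (Qk (k - 1)) (lam t k) t y xt (xP t k)))"
    using Fbe by simp
  show "\<bar>real_of_ereal (Fbar f (Qk (k - 1)) (lam t k) t y xt (xP t k)) - qr t y\<bar> \<le> e + lam t k * Dm"
  proof -
    have r: "real_of_ereal (Fbar f (Qk (k - 1)) (lam t k) t y xt (xP t k)) = Fv" using Fbe by simp
    show ?thesis unfolding r using ii i e0 eq hx pxt pen[OF xt] unfolding Fv_def a_def[symmetric] lk_def[symmetric] by linarith
  qed
  show "\<bar>fr t y xt + qr (Suc t) xt - qr t y\<bar> \<le> e + lam t k * Dm"
    using ii i e0 eq hx pxt unfolding Fv_def a_def[symmetric] lk_def[symmetric] by linarith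
qed

end


context reddp begin

lemma step_lim:
  assumes t: "1 \<le> t" "t \<le> T"
    and H: "(\<lambda>k. qr (Suc t) (xk k t) - real_of_ereal (Qk (k - 1) (Suc t) (xk k t))) \<longlonglongrightarrow> 0"
  shows "(\<lambda>k. qr t (xk k (t - 1)) - real_of_ereal (Qlow f X (Qk k) t (xk k (t - 1)))) \<longlonglongrightarrow> 0"
    and "(\<lambda>k. real_of_ereal (Fbar f (Qk (k - 1)) (lam t k) t (xk k (t - 1)) (xk k t) (xP t k)) - qr t (xk k (t - 1))) \<longlonglongrightarrow> 0"
    and "(\<lambda>k. fr t (xk k (t - 1)) (xk k t) + qr (Suc t) (xk k t) - qr t (xk k (t - 1))) \<longlonglongrightarrow> 0"
proof -
  obtain Dm where Dm: "\<forall>z\<in>Xs t. \<forall>z'\<in>Xs t. (norm (z - z'))\<^sup>2 \<le> Dm" using diam[of t] t by blast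
  define g where "g k = (qr (Suc t) (xk k t) - real_of_ereal (Qk (k - 1) (Suc t) (xk k t))) + lam t k * Dm" for k
  have g0: "g \<longlonglongrightarrow> 0"
  proof -
    have "(\<lambda>k. lam t k * Dm) \<longlonglongrightarrow> 0 * Dm" using lam_lim'[of t] t by (intro tendsto_mult tendsto_const) auto
    then have "g \<longlonglongrightarrow> 0 + 0 * Dm" unfolding g_def by (intro tendsto_add H)
    then show ?thesis by simp
  qed
  have ev: "eventually (\<lambda>k. 2 \<le> k) sequentially" by (rule eventually_ge_at_top)
  show "(\<lambda>k. qr t (xk k (t - 1)) - real_of_ereal (Qlow f X (Qk k) t (xk k (t - 1)))) \<longlonglongrightarrow> 0"
    by (rule Lim_null_comparison[OF eventually_mono[OF ev] g0])
       (use step_bounds(3)[OF t _ Dm] in \<open>simp add: g_def\<close>)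
  show "(\<lambda>k. real_of_ereal (Fbar f (Qk (k - 1)) (lam t k) t (xk k (t - 1)) (xk k t) (xP t k)) - qr t (xk k (t - 1))) \<longlonglongrightarrow> 0"
    by (rule Lim_null_comparison[OF eventually_mono[OF ev] g0])
       (use step_bounds(5)[OF t _ Dm] in \<open>simp add: g_def\<close>)
  show "(\<lambda>k. fr t (xk k (t - 1)) (xk k t) + qr (Suc t) (xk k t) - qr t (xk k (t - 1))) \<longlonglongrightarrow> 0"
    by (rule Lim_null_comparison[OF eventually_mono[OF ev] g0])
       (use step_bounds(6)[OF t _ Dm] in \<open>simp add: g_def\<close>)
qed

lemma H_all: assumes "t \<in> {2..Suc T}"
  shows "(\<lambda>k. qr t (xk k (t - 1)) - real_of_ereal (Qk (k - 1) t (xk k (t - 1)))) \<longlonglongrightarrow> 0"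
proof -
  define P where "P = (\<lambda>t. (\<lambda>k. qr t (xk k (t - 1)) - real_of_ereal (Qk (k - 1) t (xk k (t - 1)))) \<longlonglongrightarrow> 0)"
  have "P t"
  proof (rule inc_induct[of t "Suc T" P])
    show "t \<le> Suc T" using assms by simp
    show "P (Suc T)" unfolding P_def qr_def using QT1 Q_T1 by simp
    fix n assume n: "t \<le> n" "n < Suc T" "P (Suc n)"
    have n2: "n \<in> {2..T}" using n assms by auto
    have "(\<lambda>k. qr n (xk k (n - 1)) - real_of_ereal (Qlow f X (Qk k) n (xk k (n - 1)))) \<longlonglongrightarrow> 0"
      using n(3) n2 unfolding P_def by (intro step_lim(1)) auto
    then have "(\<lambda>k. qr n (xk k (n - 1)) - cval k n) \<longlonglongrightarrow> 0" unfolding cval_def .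
    then show "P n" unfolding P_def by (rule lag[OF n2])
  qed
  then show ?thesis unfolding P_def .
qed

end



lemma ereal_lim_conv:
  assumes "eventually (\<lambda>k. u k = ereal (r k)) sequentially" "r \<longlonglongrightarrow> c"
  shows "u \<longlonglongrightarrow> ereal c"
proof -
  have "(\<lambda>k. ereal (r k)) \<longlonglongrightarrow> ereal c" using assms(2) by (rule tendsto_ereal)
  then show ?thesis using tendsto_cong[OF assms(1)] by simp
qed

context reddp begin

lemma claim1: "\<forall>k\<ge>1. Q (T + 1) (xk k T) = Qk k (T + 1) (xk k T)"
  using Q_T1 QT1 by simp

lemma claim2: "\<forall>k\<ge>1. Q T (xk k (T - 1)) = Qlow f X (Qk k) T (xk k (T - 1))"
  unfolding Qlow_def Q_step[OF T1 order_refl] using QT1 Q_T1 by simp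

lemma claim3: "T \<ge> 2 \<longrightarrow> (\<forall>k\<ge>1. Q T (xk k (T - 1)) = Qk k T (xk k (T - 1)))"
proof (intro impI allI)
  fix k :: nat assume T2: "T \<ge> 2" and k: "1 \<le> k"
  define y where "y = xk k (T - 1)"
  have y: "y \<in> Xs (T - 1)" unfolding y_def using xk_in[OF k, of "T - 1"] by simp
  have TT: "T \<in> {2..T}" using T2 by simp
  have "Qk k T y = max (Qk (k - 1) T y) (Qlow f X (Qk k) T y)"
    using bwd_eq[OF k TT y] unfolding y_def by (simp add: zero_ereal_def[symmetric])
  moreover have "Qlow f X (Qk k) T y = Q T y" using claim2 k unfolding y_def by simp
  moreover have "Qk (k - 1) T y \<le> Q T y" using valid[of T y "k - 1"] T2 y by simp
  ultimately show "Q T (xk k (T - 1)) = Qk k T (xk k (T - 1))" unfolding y_def by (simp add: max_def)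
qed

lemma claim4: "\<forall>t\<in>{2..T-1}.
          ((\<lambda>k. Q t (xk k (t - 1)) - Qk k t (xk k (t - 1))) \<longlonglongrightarrow> 0)
        \<and> ((\<lambda>k. Q t (xk k (t - 1)) - Qlow f X (Qk k) t (xk k (t - 1))) \<longlonglongrightarrow> 0)"
proof
  fix t assume tt: "t \<in> {2..T-1}"
  then have t: "t \<in> {2..T}" "1 \<le> t" "t \<le> T" by auto
  define xs where "xs k = xk k (t - 1)" for k
  have xsin: "xs k \<in> Xs (t - 1)" if "1 \<le> k" for k
    unfolding xs_def using xk_in[OF that, of "t - 1"] t by auto
  have H: "(\<lambda>k. qr (Suc t) (xk k t) - real_of_ereal (Qk (k - 1) (Suc t) (xk k t))) \<longlonglongrightarrow> 0"
    using H_all[of "Suc t"] t by simp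
  define r1 where "r1 k = qr t (xs k) - cval k t" for k
  have r1: "r1 \<longlonglongrightarrow> 0" using step_lim(1)[OF t(2,3) H] unfolding r1_def cval_def xs_def .
  define r2 where "r2 k = qr t (xs k) - real_of_ereal (Qk k t (xs k))" for k
  have b2: "0 \<le> r2 k \<and> r2 k \<le> r1 k \<and> Qk k t (xs k) = ereal (real_of_ereal (Qk k t (xs k)))" if k: "1 \<le> k" for k
  proof -
    have e: "Qk k t (xs k) = ereal (real_of_ereal (Qk k t (xs k)))"
      using Qk_fin[OF k, of t "xs k"] t xsin[OF k] by auto
    have "ereal (cval k t) \<le> Qk k t (xs k)" using cut[OF k t(1) xsin[OF k]] unfolding xs_def by simp
    moreover have "Qk k t (xs k) \<le> ereal (qr t (xs k))"
      using valid[of t "xs k" k] Q_fin'[of t "xs k"] t xsin[OF k] by auto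
    ultimately show ?thesis unfolding r1_def r2_def using e by (metis ereal_less_eq(3) diff_left_mono diff_ge_0_iff_ge)
  qed
  have r2: "r2 \<longlonglongrightarrow> 0"
  proof (rule Lim_null_comparison)
    show "eventually (\<lambda>k. norm (r2 k) \<le> \<bar>r1 k\<bar>) sequentially"
      unfolding eventually_sequentially using b2 by (intro exI[of _ 1]) fastforce
    show "(\<lambda>k. \<bar>r1 k\<bar>) \<longlonglongrightarrow> 0" using r1 by (rule tendsto_rabs_zero)
  qed
  have "(\<lambda>k. Q t (xk k (t - 1)) - Qk k t (xk k (t - 1))) \<longlonglongrightarrow> ereal 0"
  proof (rule ereal_lim_conv[OF _ r2])
    show "eventually (\<lambda>k. Q t (xk k (t - 1)) - Qk k t (xk k (t - 1)) = ereal (r2 k)) sequentially"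
      using eventually_ge_at_top[of 1]
    proof (rule eventually_mono)
      fix k :: nat assume k: "1 \<le> k"
      have "Q t (xs k) = ereal (qr t (xs k))" using Q_fin'[of t "xs k"] t xsin[OF k] by auto
      moreover have "Qk k t (xs k) = ereal (real_of_ereal (Qk k t (xs k)))" using b2[OF k] by blast
      ultimately have "Q t (xs k) - Qk k t (xs k) = ereal (r2 k)" unfolding r2_def by (metis ereal_minus(1))
      then show "Q t (xk k (t - 1)) - Qk k t (xk k (t - 1)) = ereal (r2 k)" unfolding xs_def .
    qed
  qed
  moreover have "(\<lambda>k. Q t (xk k (t - 1)) - Qlow f X (Qk k) t (xk k (t - 1))) \<longlonglongrightarrow> ereal 0"
  proof (rule ereal_lim_conv[OF _ r1])
    show "eventually (\<lambda>k. Q t (xk k (t - 1)) - Qlow f X (Qk k) t (xk k (t - 1)) = ereal (r1 k)) sequentially"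
      using eventually_ge_at_top[of 1]
    proof (rule eventually_mono)
      fix k :: nat assume k: "1 \<le> k"
      have "Q t (xs k) = ereal (qr t (xs k))" using Q_fin'[of t "xs k"] t xsin[OF k] by auto
      then show "Q t (xk k (t - 1)) - Qlow f X (Qk k) t (xk k (t - 1)) = ereal (r1 k)"
        using Qlow_fin[OF k t(1)] unfolding r1_def xs_def by simp
    qed
  qed
  ultimately show "((\<lambda>k. Q t (xk k (t - 1)) - Qk k t (xk k (t - 1))) \<longlonglongrightarrow> 0)
        \<and> ((\<lambda>k. Q t (xk k (t - 1)) - Qlow f X (Qk k) t (xk k (t - 1))) \<longlonglongrightarrow> 0)"
    by (simp add: zero_ereal_def)
qed

lemma H2: "(\<lambda>k. qr (Suc 1) (xk k 1) - real_of_ereal (Qk (k - 1) (Suc 1) (xk k 1))) \<longlonglongrightarrow> 0"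
  using H_all[of 2] T1 by (simp add: numeral_2_eq_2)

lemma Q1x0: "Q 1 x0 = ereal (qr 1 x0)" using Q_fin'[of 1 x0] X0 by simp

lemma claim5: "(\<lambda>k. Qlow f X (Qk k) 1 x0) \<longlonglongrightarrow> Q 1 x0"
proof -
  obtain Dm where Dm: "\<forall>z\<in>Xs 1. \<forall>z'\<in>Xs 1. (norm (z - z'))\<^sup>2 \<le> Dm" using diam[of 1] T1 by blast
  define d where "d k = qr 1 (xk k (1 - 1)) - real_of_ereal (Qlow f X (Qk k) 1 (xk k (1 - 1)))" for k
  have d: "d \<longlonglongrightarrow> 0" unfolding d_def using step_lim(1)[OF order_refl T1 H2] .
  then have d': "(\<lambda>k. qr 1 x0 - d k) \<longlonglongrightarrow> qr 1 x0 - 0" by (intro tendsto_diff tendsto_const)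
  have "(\<lambda>k. Qlow f X (Qk k) 1 x0) \<longlonglongrightarrow> ereal (qr 1 x0 - 0)"
  proof (rule ereal_lim_conv[OF _ d'])
    show "eventually (\<lambda>k. Qlow f X (Qk k) 1 x0 = ereal (qr 1 x0 - d k)) sequentially"
      using eventually_ge_at_top[of 2]
    proof (rule eventually_mono)
      fix k :: nat assume k: "2 \<le> k"
      have x: "xk k 0 = x0" using fwd0 k by simp
      show "Qlow f X (Qk k) 1 x0 = ereal (qr 1 x0 - d k)"
        using step_bounds(2)[OF order_refl T1 k Dm] x unfolding d_def by simp
    qed
  qed
  then show ?thesis using Q1x0 by simp
qed

lemma claim6: "(\<lambda>k. Fbar f (Qk (k - 1)) (lam 1 k) 1 x0 (xk k 1) (xP 1 k)) \<longlonglongrightarrow> Q 1 x0"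
proof -
  obtain Dm where Dm: "\<forall>z\<in>Xs 1. \<forall>z'\<in>Xs 1. (norm (z - z'))\<^sup>2 \<le> Dm" using diam[of 1] T1 by blast
  define d where "d k = real_of_ereal (Fbar f (Qk (k - 1)) (lam 1 k) 1 (xk k (1 - 1)) (xk k 1) (xP 1 k)) - qr 1 (xk k (1 - 1))" for k
  have d: "d \<longlonglongrightarrow> 0" unfolding d_def using step_lim(2)[OF order_refl T1 H2] .
  then have d': "(\<lambda>k. qr 1 x0 + d k) \<longlonglongrightarrow> qr 1 x0 + 0" by (intro tendsto_add tendsto_const)
  have "(\<lambda>k. Fbar f (Qk (k - 1)) (lam 1 k) 1 x0 (xk k 1) (xP 1 k)) \<longlonglongrightarrow> ereal (qr 1 x0 + 0)"
  proof (rule ereal_lim_conv[OF _ d'])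
    show "eventually (\<lambda>k. Fbar f (Qk (k - 1)) (lam 1 k) 1 x0 (xk k 1) (xP 1 k) = ereal (qr 1 x0 + d k)) sequentially"
      using eventually_ge_at_top[of 2]
    proof (rule eventually_mono)
      fix k :: nat assume k: "2 \<le> k"
      have x: "xk k 0 = x0" using fwd0 k by simp
      show "Fbar f (Qk (k - 1)) (lam 1 k) 1 x0 (xk k 1) (xP 1 k) = ereal (qr 1 x0 + d k)"
        using step_bounds(4)[OF order_refl T1 k Dm] x unfolding d_def by simp
    qed
  qed
  then show ?thesis using Q1x0 by simp
qed

end


context reddp begin

definition "objr k = (\<Sum>t = 1..T. fr t (xk k (t - 1)) (xk k t))"

lemma xkD: "1 \<le> k \<Longrightarrow> t \<in> {1..T} \<Longrightarrow> xk k (t - 1) \<in> D t"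
  using xk_in[of k "t - 1"] Xs_D[of t] by auto

lemma obj_k: assumes k: "1 \<le> k" shows "objective f T (xk k) = ereal (objr k)"
proof -
  have "objective f T (xk k) = (\<Sum>t = 1..T. ereal (fr t (xk k (t - 1)) (xk k t)))"
    unfolding objective_def
  proof (rule sum.cong[OF refl])
    fix t assume t: "t \<in> {1..T}"
    show "f t (xk k (t - 1)) (xk k t) = ereal (fr t (xk k (t - 1)) (xk k t))"
      using f_fin[of t "xk k (t - 1)" "xk k t"] t xkD[OF k t] xk_in[OF k, of t] by auto
  qed
  then show ?thesis unfolding objr_def by simp
qed

lemma feas_k: "1 \<le> k \<Longrightarrow> feasible_traj X T x0 (xk k)"
proof -
  assume k: "1 \<le> k"
  have "xk k 0 = x0" using fwd0 k by blast
  moreover have "\<forall>t\<in>{1..T}. xk k t \<in> X t (xk k (t - 1))" using fwd k by blast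
  ultimately show ?thesis unfolding feasible_traj_def by blast
qed

lemma objr_lim: "objr \<longlonglongrightarrow> qr 1 x0"
proof -
  define s where "s t k = fr t (xk k (t - 1)) (xk k t) + qr (Suc t) (xk k t) - qr t (xk k (t - 1))" for t k
  have s: "s t \<longlonglongrightarrow> 0" if t: "t \<in> {1..T}" for t
  proof -
    have H: "(\<lambda>k. qr (Suc t) (xk k t) - real_of_ereal (Qk (k - 1) (Suc t) (xk k t))) \<longlonglongrightarrow> 0"
      using H_all[of "Suc t"] t by simp
    show ?thesis unfolding s_def[abs_def] using step_lim(3)[of t, OF _ _ H] t by auto
  qed
  have "(\<lambda>k. \<Sum>t = 1..T. s t k) \<longlonglongrightarrow> (\<Sum>t = 1..T. (0::real))" by (rule tendsto_sum) (rule s)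
  then have "(\<lambda>k. qr 1 x0 + (\<Sum>t = 1..T. s t k)) \<longlonglongrightarrow> qr 1 x0 + (\<Sum>t = 1..T. (0::real))"
    by (intro tendsto_add tendsto_const)
  then have L: "(\<lambda>k. qr 1 x0 + (\<Sum>t = 1..T. s t k)) \<longlonglongrightarrow> qr 1 x0" by simp
  have ev: "eventually (\<lambda>k. qr 1 x0 + (\<Sum>t = 1..T. s t k) = objr k) sequentially"
    using eventually_ge_at_top[of 1]
  proof (rule eventually_mono)
    fix k :: nat assume k: "1 \<le> k"
    define \<phi> where "\<phi> i = qr i (xk k (i - 1))" for i
    have tel: "(\<Sum>t = 1..T. \<phi> (Suc t) - \<phi> t) = \<phi> (Suc T) - \<phi> 1" by (rule sum_Suc_diff) simp
    have p1: "\<phi> (Suc T) = 0" unfolding \<phi>_def qr_def using Q_T1 by simp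
    have p2: "\<phi> 1 = qr 1 x0" unfolding \<phi>_def using fwd0 k by simp
    have "(\<Sum>t = 1..T. s t k) = (\<Sum>t = 1..T. fr t (xk k (t - 1)) (xk k t) + (\<phi> (Suc t) - \<phi> t))"
      by (rule sum.cong[OF refl]) (simp add: s_def \<phi>_def)
    also have "\<dots> = objr k + (\<Sum>t = 1..T. \<phi> (Suc t) - \<phi> t)"
      unfolding objr_def by (rule sum.distrib)
    finally have "(\<Sum>t = 1..T. s t k) = objr k + (\<Sum>t = 1..T. \<phi> (Suc t) - \<phi> t)" .
    then show "qr 1 x0 + (\<Sum>t = 1..T. s t k) = objr k" using tel p1 p2 by simp
  qed
  show ?thesis using tendsto_cong[OF ev, of "qr 1 x0"] L by blast
qed

lemma Q_le_traj: assumes y: "feasible_traj X T x0 y" and t: "1 \<le> t" "t \<le> Suc T"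
  shows "Q t (y (t - 1)) \<le> (\<Sum>s = t..T. f s (y (s - 1)) (y s))"
proof -
  define P where "P = (\<lambda>t. Q t (y (t - 1)) \<le> (\<Sum>s = t..T. f s (y (s - 1)) (y s)))"
  have "P t"
  proof (rule inc_induct[of t "Suc T" P])
    show "t \<le> Suc T" by fact
    show "P (Suc T)" unfolding P_def using Q_T1 by simp
    fix n assume n: "t \<le> n" "n < Suc T" "P (Suc n)"
    have n1: "1 \<le> n" "n \<le> T" using n t by auto
    have yn: "y n \<in> X n (y (n - 1))" using y n1 unfolding feasible_traj_def by auto
    have "Q n (y (n - 1)) \<le> f n (y (n - 1)) (y n) + Q (Suc n) (y n)"
      unfolding Q_step[OF n1] using yn by (rule INF_lower)
    also have "\<dots> \<le> f n (y (n - 1)) (y n) + (\<Sum>s = Suc n..T. f s (y (s - 1)) (y s))"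
      using n(3) unfolding P_def by (intro add_left_mono) simp
    also have "\<dots> = (\<Sum>s = n..T. f s (y (s - 1)) (y s))" using n1 by (simp add: sum.atLeast_Suc_atMost)
    finally show "P n" unfolding P_def .
  qed
  then show ?thesis unfolding P_def .
qed

lemma claim7: "Q 1 x0 = optval f X T x0"
proof (rule antisym)
  show "Q 1 x0 \<le> optval f X T x0" unfolding optval_def
  proof (rule INF_greatest)
    fix y assume "y \<in> {x. feasible_traj X T x0 x}"
    then have y: "feasible_traj X T x0 y" by simp
    then have "y 0 = x0" unfolding feasible_traj_def by simp
    then show "Q 1 x0 \<le> objective f T y" using Q_le_traj[OF y, of 1] unfolding objective_def by simp
  qed
  have lim: "(\<lambda>k. ereal (objr k)) \<longlonglongrightarrow> ereal (qr 1 x0)" using objr_lim by (rule tendsto_ereal)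
  have "\<forall>k\<ge>1. optval f X T x0 \<le> ereal (objr k)"
  proof (intro allI impI)
    fix k :: nat assume k: "1 \<le> k"
    have "optval f X T x0 \<le> objective f T (xk k)" unfolding optval_def
      using feas_k[OF k] by (intro INF_lower) simp
    then show "optval f X T x0 \<le> ereal (objr k)" using obj_k[OF k] by simp
  qed
  then have "optval f X T x0 \<le> ereal (qr 1 x0)" using Lim_bounded2[OF lim] by blast
  then show "optval f X T x0 \<le> Q 1 x0" using Q1x0 by simp
qed

end


context reddp begin

lemma claim8:
  assumes xs0: "xs 0 = x0" and r: "strict_mono r" and lim: "\<forall>t\<in>{1..T}. (\<lambda>j. xk (r j) t) \<longlonglongrightarrow> xs t"
  shows "optimal_solution f X T x0 xs"
proof -
  have evr: "eventually (\<lambda>j. 1 \<le> r j) sequentially"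
    unfolding eventually_sequentially using r by (intro exI[of _ 1]) (metis order_trans seq_suble)
  have conv: "(\<lambda>j. xk (r j) t) \<longlonglongrightarrow> xs t" if t: "t \<le> T" for t
  proof (cases "t = 0")
    case True
    have "eventually (\<lambda>j. xk (r j) t = xs t) sequentially"
      using evr by (rule eventually_mono) (use True fwd0 xs0 in auto)
    then show ?thesis by (rule tendsto_eventually)
  next
    case False then show ?thesis using lim t by auto
  qed
  have inXs: "xs t \<in> Xs t" if t: "t \<le> T" for t
  proof (rule Lim_in_closed_set[OF _ _ trivial_limit_sequentially conv[OF t]])
    show "closed (Xs t)" using Xs_prop[OF t] by (simp add: compact_imp_closed)
    show "eventually (\<lambda>j. xk (r j) t \<in> Xs t) sequentially" using evr by (rule eventually_mono) (use xk_in t in auto)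
  qed
  have feas: "feasible_traj X T x0 xs" unfolding feasible_traj_def
  proof (intro conjI ballI)
    show "xs 0 = x0" by (rule xs0)
    fix t assume t: "t \<in> {1..T}"
    define yj where "yj j = xk (r j) (t - 1)" for j
    define zj where "zj j = xk (r j) t" for j
    have cy: "yj \<longlonglongrightarrow> xs (t - 1)" unfolding yj_def using conv[of "t - 1"] t by auto
    have cz: "zj \<longlonglongrightarrow> xs t" unfolding zj_def using conv[of t] t by auto
    have evX: "eventually (\<lambda>j. zj j \<in> X t (yj j)) sequentially"
      using evr by (rule eventually_mono) (use fwd t in \<open>auto simp: yj_def zj_def\<close>)
    have lin: "A t *v xs t + B t *v xs (t - 1) = b t"
    proof -
      have l1: "(\<lambda>j. A t *v zj j + B t *v yj j) \<longlonglongrightarrow> A t *v xs t + B t *v xs (t - 1)"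
        by (intro tendsto_add bounded_linear.tendsto[OF matrix_vector_mul_bounded_linear] cy cz)
      have "eventually (\<lambda>j. A t *v zj j + B t *v yj j = b t) sequentially"
        using evX by (rule eventually_mono) (simp add: memX)
      then have l2: "(\<lambda>j. A t *v zj j + B t *v yj j) \<longlonglongrightarrow> b t" by (rule tendsto_eventually)
      show ?thesis using LIMSEQ_unique[OF l1 l2] .
    qed
    have gi: "g t (xs (t - 1)) (xs t) $ i \<le> 0" for i
    proof -
      have "lsc_real (\<lambda>(y, x). g t y x $ i)" using H0c t by auto
      then have cl: "closed {p. (\<lambda>(y, x). g t y x $ i) p \<le> 0}" unfolding lsc_real_def by blast
      have "(xs (t - 1), xs t) \<in> {p. (\<lambda>(y, x). g t y x $ i) p \<le> 0}"
      proof (rule Lim_in_closed_set[OF cl _ trivial_limit_sequentially])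
        show "(\<lambda>j. (yj j, zj j)) \<longlonglongrightarrow> (xs (t - 1), xs t)" by (intro tendsto_Pair cy cz)
        show "eventually (\<lambda>j. (yj j, zj j) \<in> {p. (\<lambda>(y, x). g t y x $ i) p \<le> 0}) sequentially"
          using evX by (rule eventually_mono) (simp add: memX)
      qed
      then show ?thesis by simp
    qed
    show "xs t \<in> X t (xs (t - 1))" unfolding memX using inXs[of t] t lin gi by auto
  qed
  define \<alpha> where "\<alpha> t = fr t (xs (t - 1)) (xs t)" for t
  have fa: "f t (xs (t - 1)) (xs t) = ereal (\<alpha> t)" if t: "t \<in> {1..T}" for t
  proof -
    have "xs (t - 1) \<in> D t" using inXs[of "t - 1"] Xs_D[of t] t by auto
    then show ?thesis unfolding \<alpha>_def using f_fin[of t] inXs[of t] t by auto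
  qed
  have obj: "objective f T xs = ereal (\<Sum>t = 1..T. \<alpha> t)"
    unfolding objective_def using fa by (simp add: sum.cong[OF refl fa])
  have objr_sub: "(objr \<circ> r) \<longlonglongrightarrow> qr 1 x0" using objr_lim r by (rule LIMSEQ_subseq_LIMSEQ)
  have bd: "(\<Sum>t = 1..T. \<alpha> t) - real T * \<eta> \<le> qr 1 x0" if eta: "\<eta> > 0" for \<eta>
  proof -
    have evt: "eventually (\<lambda>j. \<alpha> t - \<eta> < fr t (xk (r j) (t - 1)) (xk (r j) t)) sequentially" if t: "t \<in> {1..T}" for t
    proof -
      have "lsc_fun (case_prod (f t))" using H0b t by auto
      then have op: "open {p. ereal (\<alpha> t - \<eta>) < case_prod (f t) p}"
      proof -
        assume "lsc_fun (case_prod (f t))"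
        then have "closed {p. case_prod (f t) p \<le> ereal (\<alpha> t - \<eta>)}" unfolding lsc_fun_def by blast
        moreover have "{p. ereal (\<alpha> t - \<eta>) < case_prod (f t) p} = - {p. case_prod (f t) p \<le> ereal (\<alpha> t - \<eta>)}"
          by auto
        ultimately show ?thesis by (simp add: open_Compl)
      qed
      have mem: "(xs (t - 1), xs t) \<in> {p. ereal (\<alpha> t - \<eta>) < case_prod (f t) p}" using fa[OF t] eta by simp
      have "(\<lambda>j. (xk (r j) (t - 1), xk (r j) t)) \<longlonglongrightarrow> (xs (t - 1), xs t)"
        using conv[of "t - 1"] conv[of t] t by (intro tendsto_Pair) auto
      then have ev1: "eventually (\<lambda>j. (xk (r j) (t - 1), xk (r j) t) \<in> {p. ereal (\<alpha> t - \<eta>) < case_prod (f t) p}) sequentially"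
        using topological_tendstoD op mem by blast
      show ?thesis using eventually_conj[OF ev1 evr]
      proof (rule eventually_mono)
        fix j assume "(xk (r j) (t - 1), xk (r j) t) \<in> {p. ereal (\<alpha> t - \<eta>) < case_prod (f t) p} \<and> 1 \<le> r j"
        then have a: "ereal (\<alpha> t - \<eta>) < f t (xk (r j) (t - 1)) (xk (r j) t)" and rj: "1 \<le> r j" by auto
        have "f t (xk (r j) (t - 1)) (xk (r j) t) = ereal (fr t (xk (r j) (t - 1)) (xk (r j) t))"
          using f_fin[of t] xkD[OF rj t] xk_in[OF rj, of t] t by auto
        then show "\<alpha> t - \<eta> < fr t (xk (r j) (t - 1)) (xk (r j) t)" using a by simp
      qed
    qed
    have evall: "eventually (\<lambda>j. \<forall>t\<in>{1..T}. \<alpha> t - \<eta> < fr t (xk (r j) (t - 1)) (xk (r j) t)) sequentially"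
      using evt by (intro eventually_ball_finite) auto
    have "eventually (\<lambda>j. (\<Sum>t = 1..T. \<alpha> t) - real T * \<eta> \<le> (objr \<circ> r) j) sequentially"
      using evall
    proof (rule eventually_mono)
      fix j assume h: "\<forall>t\<in>{1..T}. \<alpha> t - \<eta> < fr t (xk (r j) (t - 1)) (xk (r j) t)"
      have "(\<Sum>t = 1..T. \<alpha> t - \<eta>) \<le> (\<Sum>t = 1..T. fr t (xk (r j) (t - 1)) (xk (r j) t))"
        using h by (intro sum_mono) (simp add: less_imp_le)
      moreover have "(\<Sum>t = 1..T. \<alpha> t - \<eta>) = (\<Sum>t = 1..T. \<alpha> t) - real T * \<eta>"
        by (simp add: sum_subtractf)
      ultimately show "(\<Sum>t = 1..T. \<alpha> t) - real T * \<eta> \<le> (objr \<circ> r) j" unfolding objr_def by simp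
    qed
    then show ?thesis using tendsto_le[OF trivial_limit_sequentially objr_sub tendsto_const] by blast
  qed
  have sa: "(\<Sum>t = 1..T. \<alpha> t) \<le> qr 1 x0"
  proof (rule field_le_epsilon)
    fix e :: real assume e: "0 < e"
    have Tp: "real T > 0" using T1 by simp
    have "(\<Sum>t = 1..T. \<alpha> t) - real T * (e / real T) \<le> qr 1 x0" using bd[of "e / real T"] e Tp by simp
    then show "(\<Sum>t = 1..T. \<alpha> t) \<le> qr 1 x0 + e" using Tp by simp
  qed
  show ?thesis unfolding optimal_solution_def
  proof (intro conjI allI impI)
    show "feasible_traj X T x0 xs" by (rule feas)
    fix y assume y: "feasible_traj X T x0 y"
    have "objective f T xs \<le> Q 1 x0" using obj sa Q1x0 by simp
    also have "\<dots> = optval f X T x0" by (rule claim7)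
    also have "\<dots> \<le> objective f T y" unfolding optval_def using y by (intro INF_lower) simp
    finally show "objective f T xs \<le> objective f T y" .
  qed
qed

end

theorem mainTheorem3:
  fixes T :: nat and x0 :: "real^'n"
    and Xs :: "nat \<Rightarrow> (real^'n) set"
    and f :: "nat \<Rightarrow> real^'n \<Rightarrow> real^'n \<Rightarrow> ereal"
    and g :: "nat \<Rightarrow> real^'n \<Rightarrow> real^'n \<Rightarrow> real^'p"
    and A B :: "nat \<Rightarrow> real^'n^'q" and b :: "nat \<Rightarrow> real^'q"
    and lam :: "nat \<Rightarrow> nat \<Rightarrow> real"
    and xP :: "nat \<Rightarrow> nat \<Rightarrow> real^'n"
    and xk :: "nat \<Rightarrow> nat \<Rightarrow> real^'n"
    and Qk :: "nat \<Rightarrow> nat \<Rightarrow> real^'n \<Rightarrow> ereal"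
    and beta :: "nat \<Rightarrow> nat \<Rightarrow> real^'n"
  defines "X \<equiv> Xfeas Xs A B b g"
  assumes T1: "T \<ge> 1"
    and X0: "Xs 0 = {x0}"
    \<comment> \<open>(H0)(a)\<close>
    and H0a: "\<forall>t\<in>{1..T}. Xs t \<noteq> {} \<and> convex (Xs t) \<and> compact (Xs t)"
    \<comment> \<open>(H0)(b)\<close>
    and H0b: "\<forall>t\<in>{1..T}. proper_fun (case_prod (f t)) \<and> convex_fun (case_prod (f t))
                 \<and> lsc_fun (case_prod (f t))"
    \<comment> \<open>(H0)(c)\<close>
    and H0c: "\<forall>t\<in>{1..T}. \<forall>i. convex_on UNIV (\<lambda>(y, x). g t y x $ i)
                 \<and> lsc_real (\<lambda>(y, x). g t y x $ i)"
    \<comment> \<open>(H0)(d)\<close>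
    and H0d: "\<forall>t\<in>{1..T}. \<exists>\<epsilon>>0.
                 (\<forall>y\<in>enlarge \<epsilon> (Xs (t - 1)). \<forall>x\<in>Xs t. f t y x \<noteq> \<infinity>)
               \<and> (\<forall>y\<in>enlarge \<epsilon> (Xs (t - 1)). \<exists>x\<in>Xs t.
                     (\<forall>i. g t y x $ i \<le> 0) \<and> A t *v x + B t *v y = b t)"
    \<comment> \<open>(H0)(e)\<close>
    and H0e: "\<forall>t\<in>{2..T}. \<exists>yb xb.
                 (yb, xb) \<in> (Xs (t - 1) \<times> rel_interior (Xs t))
                            \<inter> rel_interior {(y, x). \<forall>i. g t y x $ i \<le> 0}
               \<and> xb \<in> Xs t \<and> (\<forall>i. g t yb xb $ i \<le> 0) \<and> A t *v xb + B t *v yb = b t"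
    \<comment> \<open>REDDP: initial cuts Q_t^0 \<le> Q_t on X_{t-1}, with values in R \<union> {-\<infinity>}\<close>
    and init: "\<forall>t\<in>{2..T}. \<forall>y\<in>Xs (t - 1). Qk 0 t y \<noteq> \<infinity> \<and> Qk 0 t y \<le> Qval f X T t y"
    and QT1: "\<forall>k. Qk k (T + 1) = (\<lambda>_. 0)"
    \<comment> \<open>penalization parameters\<close>
    and lam_nonneg: "\<forall>t\<in>{1..T}. \<forall>k\<ge>1. lam t k \<ge> 0"
    and lam_1: "\<forall>t\<in>{1..T}. lam t 1 = 0"
    and lam_T: "\<forall>k\<ge>1. lam T k = 0"
    and lam_lim: "\<forall>t\<in>{1..T-1}. (\<lambda>k. lam t k) \<longlonglongrightarrow> 0"
    \<comment> \<open>prox-centers\<close>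
    and xP_in: "\<forall>t\<in>{1..T}. \<forall>k\<ge>1. xP t k \<in> Xs t"
    \<comment> \<open>forward pass\<close>
    and fwd0: "\<forall>k\<ge>1. xk k 0 = x0"
    and fwd: "\<forall>k\<ge>1. \<forall>t\<in>{1..T}. xk k t \<in> X t (xk k (t - 1)) \<and>
                 (\<forall>z\<in>X t (xk k (t - 1)).
                    Fbar f (Qk (k - 1)) (lam t k) t (xk k (t - 1)) (xk k t) (xP t k)
                    \<le> Fbar f (Qk (k - 1)) (lam t k) t (xk k (t - 1)) z (xP t k))"
    \<comment> \<open>backward pass\<close>
    and bwd: "\<forall>k\<ge>1. \<forall>t\<in>{2..T}.
                 is_subgrad (Qlow f X (Qk k) t) (xk k (t - 1)) (beta k t) \<and>
                 (\<forall>y\<in>Xs (t - 1). Qk k t y = max (Qk (k - 1) t y)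
                    (Qlow f X (Qk k) t (xk k (t - 1)) + ereal (beta k t \<bullet> (y - xk k (t - 1)))))"
  shows "(\<forall>k\<ge>1. Qval f X T (T + 1) (xk k T) = Qk k (T + 1) (xk k T))
    \<and> (\<forall>k\<ge>1. Qval f X T T (xk k (T - 1)) = Qlow f X (Qk k) T (xk k (T - 1)))
    \<and> (T \<ge> 2 \<longrightarrow> (\<forall>k\<ge>1. Qval f X T T (xk k (T - 1)) = Qk k T (xk k (T - 1))))
    \<and> (\<forall>t\<in>{2..T-1}.
          ((\<lambda>k. Qval f X T t (xk k (t - 1)) - Qk k t (xk k (t - 1))) \<longlonglongrightarrow> 0)
        \<and> ((\<lambda>k. Qval f X T t (xk k (t - 1)) - Qlow f X (Qk k) t (xk k (t - 1))) \<longlonglongrightarrow> 0))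
    \<and> ((\<lambda>k. Qlow f X (Qk k) 1 x0) \<longlonglongrightarrow> Qval f X T 1 x0)
    \<and> ((\<lambda>k. Fbar f (Qk (k - 1)) (lam 1 k) 1 x0 (xk k 1) (xP 1 k)) \<longlonglongrightarrow> Qval f X T 1 x0)
    \<and> Qval f X T 1 x0 = optval f X T x0
    \<and> (\<forall>xs r. xs 0 = x0 \<and> strict_mono r \<and> (\<forall>t\<in>{1..T}. (\<lambda>j. xk (r j) t) \<longlonglongrightarrow> xs t)
          \<longrightarrow> optimal_solution f X T x0 xs)"
proof -
  interpret R: reddp T x0 Xs f g A B b lam xP xk Qk beta X
    by (unfold_locales) (fact X_def[THEN meta_eq_to_obj_eq] T1 X0 H0a H0b H0c H0d init QT1 lam_nonneg lam_T lam_lim xP_in fwd0 fwd bwd)+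
  show ?thesis
    using R.claim1 R.claim2 R.claim3 R.claim4 R.claim5 R.claim6 R.claim7 R.claim8 by blast
qed

end
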